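(* Consider the Krasovskii-regularized Lur'e system $\dot x\in F(x)$, $y=Cx$, of the context, and suppose Assumptions 1 and 3 hold. Then the system is state finite-time stable (SFTS) if and only if $C$ is invertible (i.e., $p=n$ and $C$ is nonsingular).
   Context: System: $\dot x=Ax+Bu$, $y=Cx$, $u=-\boldsymbol\psi(y)$, $x\in\mathbb{R}^n$, $u,y\in\mathbb{R}^p$, $\boldsymbol\psi(y)=(\psi_1(y_1),\dots,\psi_p(y_p))$. Piecewise continuous: finitely many discontinuities on each bounded interval, continuous between them, finite one-sided limits. Krasovskii regularization: $\boldsymbol\Psi_i(s):=\bigcap_{\delta>0}\overline{\mathrm{co}}\,\psi_i(s+\delta[-1,1])$, $\boldsymbol\Psi(y):=\boldsymbol\Psi_1(y_1)\times\dots\times\boldsymbol\Psi_p(y_p)$, $F(x):=\{Ax-Bw:w\in\boldsymbol\Psi(Cx)\}$; solutions are absolutely continuous functions satisfying $\dot x(t)\in F(x(t))$ a.e. Assumption 1: for each $i$, $\psi_i$ is piecewise continuous and there is $\zeta_i\in(0,+\infty]$ with $\psi_i(s)(\psi_i(s)-\zeta_is)\le0$ for all $s$ (for $\zeta_i=+\infty$: $\psi_i(s)s\ge0$). Assumption 3: (i) there is a diagonal $\overline\Gamma>0$ with $\overline\Gamma CB+(CB)^\top\overline\Gamma>0$; (ii) the origin is globally asymptotically stable for $\dot x\in F(x)$ (all maximal solutions defined on $\mathbb{R}_{\ge0}$ and there is $\beta\in\mathcal{KL}$ with $|x(t)|\le\beta(|x(0)|,t)$ for all solutions and $t\ge0$);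 (iii) for each $i$, $\lim_{s\to0^+}\psi_i(s)>0$ and $\lim_{s\to0^-}\psi_i(s)<0$. SFTS: all solutions forward complete, the origin is globally asymptotically stable, and for each solution there is $T\in[0,\infty)$ with $x(t)=0$ for all $t\ge T$. *)

theory Defs
  imports "HOL-Analysis.Analysis"
begin

definition piecewise_cont :: "(real \<Rightarrow> real) \<Rightarrow> bool" where
  "piecewise_cont f \<longleftrightarrow>
     (\<forall>a b. finite {s \<in> {a..b}. \<not> isCont f s}) \<and>
     (\<forall>s. \<exists>l. (f \<longlongrightarrow> l) (at_left s)) \<and>
     (\<forall>s. \<exists>l. (f \<longlongrightarrow> l) (at_right s))"

definition kras :: "(real \<Rightarrow> real) \<Rightarrow> real \<Rightarrow> real set" where
  "kras f s = (\<Inter>\<delta>\<in>{0<..}. closure (convex hull (f ` {s - \<delta> .. s + \<delta>})))"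

definition kras_vec :: "('p \<Rightarrow> real \<Rightarrow> real) \<Rightarrow> real^'p \<Rightarrow> (real^'p) set" where
  "kras_vec psi y = {w. \<forall>i. w $ i \<in> kras (psi i) (y $ i)}"

definition lure_F :: "real^'n^'n \<Rightarrow> real^'p^'n \<Rightarrow> real^'n^'p \<Rightarrow> ('p \<Rightarrow> real \<Rightarrow> real)
                      \<Rightarrow> real^'n \<Rightarrow> (real^'n) set" where
  "lure_F A B C psi x = {A *v x - B *v w | w. w \<in> kras_vec psi (C *v x)}"

definition abs_cont_on :: "real set \<Rightarrow> (real \<Rightarrow> 'a::real_normed_vector) \<Rightarrow> bool" where
  "abs_cont_on S f \<longleftrightarrow>
     (\<forall>\<epsilon>>0. \<exists>\<delta>>0. \<forall>(N::nat) (u::nat \<Rightarrow> real) v.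
        (\<forall>k<N. u k \<in> S \<and> v k \<in> S \<and> u k \<le> v k) \<and>
        (\<forall>j<N. \<forall>k<N. j \<noteq> k \<longrightarrow> v j \<le> u k \<or> v k \<le> u j) \<and>
        (\<Sum>k<N. v k - u k) < \<delta>
        \<longrightarrow> (\<Sum>k<N. norm (f (v k) - f (u k))) < \<epsilon>)"

definition is_sol :: "('a::real_normed_vector \<Rightarrow> 'a set) \<Rightarrow> (real \<Rightarrow> 'a) \<Rightarrow> ereal \<Rightarrow> bool" where
  "is_sol F x T \<longleftrightarrow> 0 < T \<and>
     (\<forall>t. 0 \<le> t \<and> ereal t < T \<longrightarrow> abs_cont_on {0..t} x) \<and>
     (AE t in lborel. 0 < t \<and> ereal t < T \<longrightarrow>
         (\<exists>v. (x has_vector_derivative v) (at t) \<and> v \<in> F (x t)))"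

definition is_max_sol :: "('a::real_normed_vector \<Rightarrow> 'a set) \<Rightarrow> (real \<Rightarrow> 'a) \<Rightarrow> ereal \<Rightarrow> bool" where
  "is_max_sol F x T \<longleftrightarrow> is_sol F x T \<and>
     \<not> (\<exists>y T'. T < T' \<and> is_sol F y T' \<and> (\<forall>t. 0 \<le> t \<and> ereal t < T \<longrightarrow> y t = x t))"

definition classK :: "(real \<Rightarrow> real) \<Rightarrow> bool" where
  "classK \<alpha> \<longleftrightarrow> continuous_on {0..} \<alpha> \<and> \<alpha> 0 = 0 \<and> strict_mono_on {0..} \<alpha>"

definition classKL :: "(real \<Rightarrow> real \<Rightarrow> real) \<Rightarrow> bool" where
  "classKL \<beta> \<longleftrightarrow> continuous_on ({0..} \<times> {0..}) (\<lambda>(r, t). \<beta> r t) \<and>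
     (\<forall>t\<ge>0. classK (\<lambda>r. \<beta> r t)) \<and>
     (\<forall>r\<ge>0. antimono_on {0..} (\<beta> r) \<and> (\<beta> r \<longlongrightarrow> 0) at_top)"

definition forward_complete :: "('a::real_normed_vector \<Rightarrow> 'a set) \<Rightarrow> bool" where
  "forward_complete F \<longleftrightarrow> (\<forall>x T. is_max_sol F x T \<longrightarrow> T = \<infinity>)"

definition GAS :: "('a::real_normed_vector \<Rightarrow> 'a set) \<Rightarrow> bool" where
  "GAS F \<longleftrightarrow> forward_complete F \<and>
     (\<exists>\<beta>. classKL \<beta> \<and> (\<forall>x T. is_sol F x T \<longrightarrow>
        (\<forall>t. 0 \<le> t \<and> ereal t < T \<longrightarrow> norm (x t) \<le> \<beta> (norm (x 0)) t)))"

definition SFTS :: "('a::real_normed_vector \<Rightarrow> 'a set) \<Rightarrow> bool" where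
  "SFTS F \<longleftrightarrow> forward_complete F \<and> GAS F \<and>
     (\<forall>x T. is_sol F x T \<longrightarrow>
        (\<exists>T0\<ge>0. \<forall>t. T0 \<le> t \<and> ereal t < T \<longrightarrow> x t = 0))"

definition assumption1 :: "('p \<Rightarrow> real \<Rightarrow> real) \<Rightarrow> bool" where
  "assumption1 psi \<longleftrightarrow> (\<forall>i. piecewise_cont (psi i) \<and>
     ((\<exists>\<zeta>>0. \<forall>s. psi i s * (psi i s - \<zeta> * s) \<le> 0) \<or> (\<forall>s. psi i s * s \<ge> 0)))"

definition diag_mat :: "real^'p \<Rightarrow> real^'p^'p" where
  "diag_mat g = (\<chi> i j. if i = j then g $ i else 0)"

definition assumption3 :: "real^'n^'n \<Rightarrow> real^'p^'n \<Rightarrow> real^'n^'p \<Rightarrow> ('p \<Rightarrow> real \<Rightarrow> real) \<Rightarrow> bool" where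
  "assumption3 A B C psi \<longleftrightarrow>
     (\<exists>\<gamma>::real^'p. (\<forall>i. \<gamma> $ i > 0) \<and>
        (let G = diag_mat \<gamma>; M = G ** (C ** B) + transpose (C ** B) ** G
         in \<forall>v. v \<noteq> 0 \<longrightarrow> v \<bullet> (M *v v) > 0)) \<and>
     GAS (lure_F A B C psi) \<and>
     (\<forall>i. (\<exists>l>0. (psi i \<longlongrightarrow> l) (at_right 0)) \<and> (\<exists>l<0. (psi i \<longlongrightarrow> l) (at_left 0)))"

end

theory Submission
  imports Defs
begin



lemma deriv_le_eps:
  fixes f :: "real \<Rightarrow> real"
  assumes "(f has_real_derivative d) (at t)" "d \<le> 0" "e > 0"
  shows "\<exists>r>0. \<forall>s. \<bar>s - t\<bar> < r \<longrightarrow> (t \<le> s \<longrightarrow> f s - f t \<le> e*(s-t)) \<and> (s \<le> t \<longrightarrow> f t - f s \<le> e*(t-s))"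
proof -
  from assms(1) have "(f has_derivative (\<lambda>h. d*h)) (at t)" by (simp add: has_field_derivative_def)
  then obtain r where r: "r>0" "\<forall>s. norm(s-t) < r \<longrightarrow> norm(f s - f t - d*(s-t)) \<le> e*norm(s-t)"
    using has_derivative_at_alt assms(3) by blast
  show ?thesis
  proof (intro exI[of _ r] conjI allI impI)
    fix s assume s: "\<bar>s - t\<bar> < r"
    then have h: "\<bar>f s - f t - d*(s-t)\<bar> \<le> e*\<bar>s-t\<bar>" using r by auto
    { assume "t \<le> s"
      then have "d*(s-t) \<le> 0" using assms(2) by (simp add: mult_nonpos_nonneg)
      then show "f s - f t \<le> e*(s-t)" using h \<open>t \<le> s\<close> by auto }
    { assume "s \<le> t"
      then have "d*(s-t) \<ge> 0" using assms(2) by (simp add: mult_nonpos_nonpos)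
      then show "f t - f s \<le> e*(t-s)" using h \<open>s \<le> t\<close> by auto }
  qed (use r in auto)
qed


lemma half_le_contra: "(x::real) \<le> x/2 \<Longrightarrow> 0 < x \<Longrightarrow> False" by linarith

lemma ac_mono:
  fixes f :: "real \<Rightarrow> real"
  assumes ab: "a \<le> b" and ac: "abs_cont_on {a..b} f"
    and ae: "AE t in lborel. a < t \<and> t < b \<longrightarrow> (\<exists>d. (f has_real_derivative d) (at t) \<and> d \<le> 0)"
  shows "f b \<le> f a"
proof -
  have key: "f b - f a \<le> e * (b - a) + e" if e: "e > 0" for e
  proof -
    from ac e obtain \<delta> where \<delta>: "\<delta>>0" and ac\<delta>0: "\<forall>(N::nat) (u::nat \<Rightarrow> real) v.
        (\<forall>k<N. u k \<in> {a..b} \<and> v k \<in> {a..b} \<and> u k \<le> v k) \<and>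
        (\<forall>j<N. \<forall>k<N. j \<noteq> k \<longrightarrow> v j \<le> u k \<or> v k \<le> u j) \<and>
        (\<Sum>k<N. v k - u k) < \<delta>
        \<longrightarrow> (\<Sum>k<N. norm (f (v k) - f (u k))) < e"
      unfolding abs_cont_on_def by blast
    have ac\<delta>: "\<And>(N::nat) (u::nat \<Rightarrow> real) v.
        (\<forall>k<N. u k \<in> {a..b} \<and> v k \<in> {a..b} \<and> u k \<le> v k) \<Longrightarrow>
        (\<forall>j<N. \<forall>k<N. j \<noteq> k \<longrightarrow> v j \<le> u k \<or> v k \<le> u j) \<Longrightarrow>
        (\<Sum>k<N. v k - u k) < \<delta>
        \<Longrightarrow> (\<Sum>k<N. norm (f (v k) - f (u k))) < e"
      using ac\<delta>0 by blast
    from ae obtain Z where Z: "Z \<in> null_sets lborel"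
      "{t. \<not>(a < t \<and> t < b \<longrightarrow> (\<exists>d. (f has_real_derivative d) (at t) \<and> d \<le> 0))} \<subseteq> Z"
      by (auto simp: eventually_ae_filter)
    define E where "E = Z \<union> {a,b}"
    have Enull: "E \<in> null_sets lebesgue"
      unfolding E_def using Z(1) null_sets_completionI countable_imp_null_set_lborel
      by (metis countable_empty countable_insert null_sets.Un)
    then have "E \<in> sets lebesgue" by auto
    then obtain T where T: "open T" "E \<subseteq> T" "(T - E) \<in> lmeasurable" "emeasure lebesgue (T - E) < ennreal \<delta>"
      using sets_lebesgue_outer_open \<delta> by metis
    have TE: "T = (T - E) \<union> E" using T(2) by blast
    have Tm: "T \<in> lmeasurable"
      by (metis TE T(3) Enull fmeasurableI_null_sets fmeasurable.Un)
    have "measure lebesgue T = measure lebesgue (T - E)"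
      using measure_Diff_null_set[of T lebesgue E] Tm Enull by (simp add: fmeasurable_def)
    also have "\<dots> < \<delta>"
      using T(3,4) \<delta> by (simp add: emeasure_eq_measure2 ennreal_less_iff)
    finally have Tmeas: "measure lebesgue T < \<delta>" .
    define P where "P t r \<longleftrightarrow> r > 0 \<and> (t \<in> T \<longrightarrow> ball t r \<subseteq> T) \<and>
       (t \<notin> T \<and> a < t \<and> t < b \<longrightarrow> (\<forall>s. \<bar>s - t\<bar> < r \<longrightarrow> (t \<le> s \<longrightarrow> f s - f t \<le> e*(s-t)) \<and> (s \<le> t \<longrightarrow> f t - f s \<le> e*(t-s))))" for t r
    have "\<exists>r. P t r" for t
    proof (cases "t \<in> T")
      case True
      then obtain r where "r > 0" "ball t r \<subseteq> T" using T(1) openE by metis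
      then show ?thesis using True unfolding P_def by blast
    next
      case False
      show ?thesis
      proof (cases "a < t \<and> t < b")
        case True
        have "t \<notin> Z" using False T(2) unfolding E_def by blast
        then obtain d where "(f has_real_derivative d) (at t)" "d \<le> 0" using Z(2) True by blast
        then obtain r where "r > 0" "\<forall>s. \<bar>s - t\<bar> < r \<longrightarrow> (t \<le> s \<longrightarrow> f s - f t \<le> e*(s-t)) \<and> (s \<le> t \<longrightarrow> f t - f s \<le> e*(t-s))"
          using deriv_le_eps e by blast
        then show ?thesis using False unfolding P_def by blast
      next
        case False2: False
        then show ?thesis using False unfolding P_def by (intro exI[of _ 1]) auto
      qed
    qed
    then have Pr: "P t (SOME r. P t r)" for t by (meson someI_ex)
    define r where "r t = (SOME r. P t r)" for t
    have rpos: "\<forall>t. 0 < r t" using Pr unfolding r_def P_def by blast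
    obtain p where p: "p tagged_division_of {a..b}" "(\<lambda>t. ball t (r t)) fine p"
      using fine_division_exists_real[OF gauge_ball_dependent[OF rpos]] by blast
    have fin: "finite p" using p(1) by blast
    have Kform: "K = {Inf K..Sup K} \<and> Inf K \<le> t \<and> t \<le> Sup K \<and> K \<subseteq> {a..b} \<and> K \<subseteq> ball t (r t) \<and> Inf K \<in> K \<and> Sup K \<in> K"
      if tKp: "(t,K) \<in> p" for t K
    proof -
      obtain u v where K: "K = cbox u v" using tagged_division_ofD(4)[OF p(1) tKp] by blast
      have "t \<in> K" using tagged_division_ofD(2)[OF p(1) tKp] .
      then have uv: "u \<le> v" "u \<le> t" "t \<le> v" using K by auto
      then have "Inf K = u" "Sup K = v" using K by auto
      then show ?thesis using K uv tagged_division_ofD(3)[OF p(1) tKp] p(2) tKp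
        unfolding fine_def by auto
    qed
    define g where "g = (\<lambda>(t::real,K::real set). f (Sup K) - f (Inf K))"
    have tel: "(\<Sum>q\<in>p. g q) = f b - f a"
      unfolding g_def using additive_tagged_division_1[OF ab p(1), of f] by simp
    have len: "(\<Sum>(t,K)\<in>p. Sup K - Inf K) = b - a"
      using additive_tagged_division_1[OF ab p(1), of "\<lambda>x. x"] by simp
    have split: "(\<Sum>q\<in>p. g q) = (\<Sum>q\<in>p. if fst q \<in> T then g q else 0) + (\<Sum>q\<in>p. if fst q \<in> T then 0 else g q)"
      by (auto simp: sum.distrib[symmetric] intro!: sum.cong)
    have part2: "(\<Sum>q\<in>p. if fst q \<in> T then 0 else g q) \<le> e * (b - a)"
    proof -
      have "(\<Sum>q\<in>p. if fst q \<in> T then 0 else g q) \<le> (\<Sum>(t,K)\<in>p. e * (Sup K - Inf K))"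
      proof (rule sum_mono)
        fix q assume q: "q \<in> p"
        obtain t K where tK: "q = (t,K)" by fastforce
        have KK: "K = {Inf K..Sup K}" "Inf K \<le> t" "t \<le> Sup K" "K \<subseteq> {a..b}" "K \<subseteq> ball t (r t)"
          using Kform q tK by blast+
        show "(if fst q \<in> T then 0 else g q) \<le> (case q of (t,K) \<Rightarrow> e * (Sup K - Inf K))"
        proof (cases "t \<in> T")
          case True then show ?thesis using tK KK e by auto
        next
          case False
          have tin: "t \<in> K" using KK by auto
          have "a \<noteq> t" "b \<noteq> t" using False T(2) unfolding E_def by auto
          then have atb: "a < t" "t < b" using tin KK(4) by force+
          have PP: "P t (r t)" using Pr unfolding r_def by blast
          have "Sup K \<in> K" "Inf K \<in> K" using KK(1,2,3) by (metis atLeastAtMost_iff order.trans order.refl)+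
          then have "Sup K \<in> ball t (r t)" "Inf K \<in> ball t (r t)" using KK(5) by auto
          then have d1: "\<bar>Sup K - t\<bar> < r t" "\<bar>Inf K - t\<bar> < r t" by (auto simp: dist_real_def)
          have "f (Sup K) - f t \<le> e * (Sup K - t)" "f t - f (Inf K) \<le> e * (t - Inf K)"
            using PP False atb d1 KK(2,3) unfolding P_def by blast+
          then show ?thesis using False tK unfolding g_def by (auto simp: algebra_simps)
        qed
      qed
      also have "\<dots> = e * (b - a)" using len by (simp add: sum_distrib_left[symmetric] split_beta)
      finally show ?thesis .
    qed
    define p1 where "p1 = {q\<in>p. fst q \<in> T \<and> Inf (snd q) < Sup (snd q)}"
    have p1fin: "finite p1" using fin unfolding p1_def by auto
    have "(\<Sum>q\<in>p. if fst q \<in> T then g q else 0) = (\<Sum>q\<in>p1. g q)"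
    proof -
      have "(\<Sum>q\<in>p. if fst q \<in> T then g q else 0) = (\<Sum>q\<in>p. if q \<in> p1 then g q else 0)"
      proof (rule sum.cong)
        fix q assume q: "q \<in> p"
        obtain t K where tK: "q = (t,K)" by fastforce
        have "Inf K \<le> Sup K" using Kform q tK by force
        then show "(if fst q \<in> T then g q else 0) = (if q \<in> p1 then g q else 0)"
          using q tK unfolding p1_def g_def by auto
      qed simp
      also have "\<dots> = (\<Sum>q\<in>p1. g q)"
        using fin by (simp add: sum.inter_filter[symmetric] p1_def)
      finally show ?thesis .
    qed
    also have "\<dots> \<le> (\<Sum>q\<in>p1. \<bar>g q\<bar>)" by (rule sum_mono) simp
    also have "\<dots> < e"
    proof -
      obtain h where h: "bij_betw h {0..<card p1} p1" using ex_bij_betw_nat_finite[OF p1fin] by blast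
      define N where "N = card p1"
      define u where "u k = Inf (snd (h k))" for k
      define v where "v k = Sup (snd (h k))" for k
      have hin: "h k \<in> p1" if "k < N" for k using h that unfolding N_def bij_betw_def by auto
      have hinj: "h j \<noteq> h k" if "j < N" "k < N" "j \<noteq> k" for j k
        using h that unfolding N_def bij_betw_def inj_on_def by auto
      have props: "snd (h k) = {u k..v k} \<and> u k < v k \<and> u k \<in> {a..b} \<and> v k \<in> {a..b} \<and> {u k..v k} \<subseteq> T" if "k < N" for k
      proof -
        obtain t K where tK: "h k = (t,K)" by fastforce
        have q: "(t,K) \<in> p" "t \<in> T" "Inf K < Sup K" using hin[OF that] tK unfolding p1_def by auto
        have KK: "K = {Inf K..Sup K}" "Inf K \<le> t" "t \<le> Sup K" "K \<subseteq> {a..b}" "K \<subseteq> ball t (r t)" "Inf K \<in> K" "Sup K \<in> K"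
          using Kform q by blast+
        have "ball t (r t) \<subseteq> T" using Pr q(2) unfolding r_def P_def by blast
        then have KT: "K \<subseteq> T" using KK(5) by blast
        have ab1: "Inf K \<in> {a..b}" "Sup K \<in> {a..b}" using KK(4,6,7) by blast+
        have "{Inf K..Sup K} \<subseteq> T" using KT KK(1) by simp
        then show ?thesis using KK(1) q(3) ab1 tK unfolding u_def v_def by simp
      qed
      have disj: "v j \<le> u k \<or> v k \<le> u j" if "j < N" "k < N" "j \<noteq> k" for j k
      proof (rule ccontr)
        assume c: "\<not> (v j \<le> u k \<or> v k \<le> u j)"
        obtain tj Kj where j: "h j = (tj,Kj)" by fastforce
        obtain tk Kk where k: "h k = (tk,Kk)" by fastforce
        have "interior Kj \<inter> interior Kk = {}"
          using tagged_division_ofD(5)[OF p(1), of tj Kj tk Kk] hin[OF that(1)] hin[OF that(2)] hinj[OF that] j k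
          unfolding p1_def by auto
        moreover have "Kj = {u j..v j}" "Kk = {u k..v k}" using props[OF that(1)] props[OF that(2)] j k by auto
        moreover define m where "m = (max (u j) (u k) + min (v j) (v k)) / 2"
        have "m \<in> {u j<..<v j}" "m \<in> {u k<..<v k}" using c props[OF that(1)] props[OF that(2)] unfolding m_def by auto
        ultimately show False by auto
      qed
      have "(\<Sum>k<N. v k - u k) = measure lebesgue (\<Union>k\<in>{..<N}. {u k..v k})"
      proof -
        have "measure lebesgue (\<Union>k\<in>{..<N}. {u k..v k}) = (\<Sum>k<N. measure lebesgue {u k..v k})"
        proof (rule measure_negligible_finite_Union_image)
          show "pairwise (\<lambda>x y. negligible ({u x..v x} \<inter> {u y..v y})) {..<N}"
            unfolding pairwise_def
          proof (intro ballI impI)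
            fix j k assume jk: "j \<in> {..<N}" "k \<in> {..<N}" "j \<noteq> k"
            show "negligible ({u j..v j} \<inter> {u k..v k})"
            proof (cases "v j \<le> u k")
              case True
              then have "{u j..v j} \<inter> {u k..v k} \<subseteq> {u k}" by auto
              then show ?thesis using negligible_subset negligible_sing by metis
            next
              case False
              then have "v k \<le> u j" using disj jk by auto
              then have "{u j..v j} \<inter> {u k..v k} \<subseteq> {u j}" by auto
              then show ?thesis using negligible_subset negligible_sing by metis
            qed
          qed
        qed auto
        also have "\<dots> = (\<Sum>k<N. v k - u k)"
          using props by (intro sum.cong) (auto simp: less_imp_le)
        finally show ?thesis by simp
      qed
      also have "\<dots> \<le> measure lebesgue T"
        using props Tm by (intro measure_mono_fmeasurable) auto
      finally have "(\<Sum>k<N. v k - u k) < \<delta>" using Tmeas by linarith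
      then have "(\<Sum>k<N. norm (f (v k) - f (u k))) < e"
        using ac\<delta>[of N u v] props disj by (auto simp: less_imp_le)
      moreover have "(\<Sum>q\<in>p1. \<bar>g q\<bar>) = (\<Sum>k<N. norm (f (v k) - f (u k)))"
      proof -
        have "(\<Sum>q\<in>p1. \<bar>g q\<bar>) = (\<Sum>k\<in>{0..<card p1}. \<bar>g (h k)\<bar>)"
          using sum.reindex_bij_betw[OF h, of "\<lambda>q. \<bar>g q\<bar>"] by simp
        also have "\<dots> = (\<Sum>k<N. norm (f (v k) - f (u k)))"
          unfolding N_def u_def v_def g_def by (intro sum.cong) (auto simp: split_beta atLeast0LessThan)
        finally show ?thesis .
      qed
      ultimately show ?thesis by simp
    qed
    finally have "(\<Sum>q\<in>p. if fst q \<in> T then g q else 0) < e" .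
    then show ?thesis using tel split part2 by linarith
  qed
  show ?thesis
  proof (rule ccontr)
    assume "\<not> f b \<le> f a"
    then have pos: "f b - f a > 0" by simp
    define e where "e = (f b - f a) / (2 * (b - a + 1))"
    have e: "e > 0" using pos ab unfolding e_def by auto
    have bp: "b - a + 1 > 0" using ab by simp
    have "e * (b - a) + e = e * (b - a + 1)" by (simp add: algebra_simps)
    also have "\<dots> = (f b - f a) / 2" unfolding e_def using bp by (simp add: field_simps)
    finally have eq: "e * (b - a) + e = (f b - f a) / 2" .
    have "f b - f a \<le> (f b - f a) / 2" using key[OF e] unfolding eq .
    then show False using pos half_le_contra by blast
  qed
qed




definition apow :: "real^'n^'n \<Rightarrow> real^'n \<Rightarrow> nat \<Rightarrow> real^'n" where
  "apow M x0 n = ((\<lambda>v. M *v v) ^^ n) x0"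

definition linsol :: "real^'n^'n \<Rightarrow> real^'n \<Rightarrow> real \<Rightarrow> real^'n" where
  "linsol M x0 t = (\<chi> j. \<Sum>n. (apow M x0 n $ j / fact n) * t^n)"

lemma apow_0[simp]: "apow M x0 0 = x0" by (simp add: apow_def)
lemma apow_Suc: "apow M x0 (Suc n) = M *v apow M x0 n" by (simp add: apow_def)

lemma mat_bound: fixes M :: "real^'n^'m" obtains K :: real where "K > 0" "\<And>v. norm (M *v v) \<le> K * norm v"
  using linear_bounded_pos[OF matrix_vector_mul_linear[of M]] by blast

lemma apow_bound:
  assumes "K > 0" "\<And>v. norm (M *v v) \<le> K * norm v"
  shows "norm (apow M x0 n) \<le> K^n * norm x0"
proof (induction n)
  case 0 then show ?case by simp
next
  case (Suc n)
  have "norm (apow M x0 (Suc n)) \<le> K * norm (apow M x0 n)" using assms(2) by (simp add: apow_Suc)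
  also have "\<dots> \<le> K * (K^n * norm x0)" using Suc assms(1) by (simp add: mult_left_mono)
  finally show ?case by simp
qed

lemma apow_summable:
  fixes N :: "real^'n^'m"
  shows "summable (\<lambda>n. ((N *v apow M x0 n) $ j / fact n) * y^n)"
proof -
  obtain K where K: "K > 0" "\<And>v. norm (M *v v) \<le> K * norm v" using mat_bound by blast
  obtain KN where KN: "KN > 0" "\<And>v. norm (N *v v) \<le> KN * norm v"
    using linear_bounded_pos[OF matrix_vector_mul_linear[of N]] by blast
  have s: "summable (\<lambda>n. KN * norm x0 * (inverse (fact n) * (K * \<bar>y\<bar>)^n))"
    by (intro summable_mult summable_exp)
  show ?thesis
  proof (rule summable_comparison_test'[OF s])
    fix n :: nat
    have "\<bar>(N *v apow M x0 n) $ j\<bar> \<le> norm (N *v apow M x0 n)" by (rule component_le_norm_cart)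
    also have "\<dots> \<le> KN * norm (apow M x0 n)" by (rule KN(2))
    also have "\<dots> \<le> KN * (K^n * norm x0)" using apow_bound[OF K] KN(1) by (simp add: mult_left_mono)
    finally have h: "\<bar>(N *v apow M x0 n) $ j\<bar> \<le> KN * (K^n * norm x0)" .
    have "norm (((N *v apow M x0 n) $ j / fact n) * y^n) = \<bar>(N *v apow M x0 n) $ j\<bar> * (inverse (fact n) * \<bar>y\<bar>^n)"
      by (simp add: abs_mult power_abs divide_inverse)
    also have "\<dots> \<le> (KN * (K^n * norm x0)) * (inverse (fact n) * \<bar>y\<bar>^n)"
      by (rule mult_right_mono[OF h]) simp
    also have "\<dots> = KN * norm x0 * (inverse (fact n) * (K * \<bar>y\<bar>)^n)"
      by (simp add: power_mult_distrib algebra_simps)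
    finally show "norm (((N *v apow M x0 n) $ j / fact n) * y^n) \<le> KN * norm x0 * (inverse (fact n) * (K * \<bar>y\<bar>)^n)" .
  qed
qed

lemma apow_summable1: "summable (\<lambda>n. (apow M x0 n $ j / fact n) * y^n)"
  using apow_summable[of "mat 1" M x0 j y] by simp

lemma linsol_mult:
  fixes N :: "real^'n^'m"
  shows "(N *v linsol M x0 t) $ i = (\<Sum>n. ((N *v apow M x0 n) $ i / fact n) * t^n)"
proof -
  have "(N *v linsol M x0 t) $ i = (\<Sum>j\<in>UNIV. N $ i $ j * (\<Sum>n. (apow M x0 n $ j / fact n) * t^n))"
    by (simp add: matrix_vector_mult_def linsol_def)
  also have "\<dots> = (\<Sum>j\<in>UNIV. \<Sum>n. N $ i $ j * ((apow M x0 n $ j / fact n) * t^n))"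
    by (intro sum.cong refl suminf_mult[symmetric] apow_summable1)
  also have "\<dots> = (\<Sum>n. \<Sum>j\<in>UNIV. N $ i $ j * ((apow M x0 n $ j / fact n) * t^n))"
    by (rule suminf_sum[symmetric]) (intro summable_mult apow_summable1)
  also have "\<dots> = (\<Sum>n. ((N *v apow M x0 n) $ i / fact n) * t^n)"
    by (rule arg_cong[where f=suminf], rule ext)
       (simp add: matrix_vector_mult_def sum_distrib_left sum_distrib_right sum_divide_distrib algebra_simps)
  finally show ?thesis .
qed

lemma linsol_0[simp]: "linsol M x0 0 = x0"
proof -
  have "linsol M x0 0 $ j = x0 $ j" for j
    using powser_zero[of "\<lambda>n. apow M x0 n $ j / fact n"] by (simp add: linsol_def)
  then show ?thesis by (simp add: vec_eq_iff)
qed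

lemma vec_sum_axis: "(v::real^'n) = (\<Sum>j\<in>UNIV. (v $ j) *\<^sub>R axis j 1)"
  using basis_expansion[of v] by (simp add: scalar_mult_eq_scaleR)

lemma linsol_deriv: fixes M :: "real^'n^'n" shows "((\<lambda>t. linsol M x0 t) has_vector_derivative (M *v linsol M x0 t)) (at t)"
proof -
  have comp: "((\<lambda>t. linsol M x0 t $ j) has_real_derivative (M *v linsol M x0 t) $ j) (at t)" for j
  proof -
    define c where "c n = apow M x0 n $ j / fact n" for n
    have D1: "((\<lambda>t. \<Sum>n. c n * t^n) has_field_derivative (\<Sum>n. diffs c n * t^n)) (at t)"
      by (rule termdiffs_strong_converges_everywhere) (unfold c_def, rule apow_summable1)
    have dif: "diffs c n = (M *v apow M x0 n) $ j / fact n" for n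
      by (simp add: diffs_def c_def apow_Suc divide_simps)
    have f: "(\<lambda>t. linsol M x0 t $ j) = (\<lambda>t. \<Sum>n. c n * t^n)" by (simp add: linsol_def c_def)
    have g: "(\<Sum>n. diffs c n * t^n) = (M *v linsol M x0 t) $ j"
      unfolding dif by (rule linsol_mult[symmetric])
    show ?thesis using D1 unfolding f g .
  qed
  have D: "((\<lambda>t. \<Sum>j\<in>UNIV. (linsol M x0 t $ j) *\<^sub>R (axis j 1 :: real^'n)) has_vector_derivative
        (\<Sum>j\<in>UNIV. ((M *v linsol M x0 t) $ j) *\<^sub>R axis j 1)) (at t)"
  proof (rule has_vector_derivative_sum)
    fix j :: 'n
    show "((\<lambda>t. (linsol M x0 t $ j) *\<^sub>R (axis j 1 :: real^'n)) has_vector_derivative ((M *v linsol M x0 t) $ j) *\<^sub>R axis j 1) (at t)"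
      using has_vector_derivative_scaleR[OF comp[of j] has_vector_derivative_const[of "axis j 1"]] by simp
  qed
  have eq1: "(\<lambda>t. \<Sum>j\<in>UNIV. (linsol M x0 t $ j) *\<^sub>R (axis j 1 :: real^'n)) = linsol M x0"
    by (rule ext, rule vec_sum_axis[symmetric])
  have eq2: "(\<Sum>j\<in>UNIV. ((M *v linsol M x0 t) $ j) *\<^sub>R axis j 1) = M *v linsol M x0 t"
    by (rule vec_sum_axis[symmetric])
  show ?thesis using D unfolding eq1 eq2 .
qed

lemma linsol_kernel:
  fixes C :: "real^'n^'p"
  assumes "C ** M = 0" "C *v x0 = 0"
  shows "C *v linsol M x0 t = 0"
proof -
  have a: "C *v apow M x0 n = 0" for n
    by (cases n) (simp_all add: assms apow_Suc matrix_vector_mul_assoc)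
  show ?thesis by (simp add: vec_eq_iff linsol_mult a)
qed

lemma linsol_cont: "continuous_on S (linsol M x0)"
  by (intro continuous_at_imp_continuous_on ballI has_vector_derivative_continuous[OF linsol_deriv])

lemma linsol_nonzero:
  assumes "x0 \<noteq> 0" "t \<ge> 0"
  shows "linsol M x0 t \<noteq> 0"
proof -
  obtain K where K: "K > 0" "\<And>v. norm (M *v v) \<le> K * norm v" using mat_bound by blast
  define x where "x = linsol M x0"
  define q where "q s = exp (2*K * s) * (x s \<bullet> x s)" for s
  have "q 0 \<le> q t"
  proof (rule DERIV_nonneg_imp_nondecreasing[OF assms(2)])
    fix s :: real
    have xd: "((\<lambda>s. x s) has_vector_derivative (M *v x s)) (at s)" unfolding x_def by (rule linsol_deriv)
    have e1: "((\<lambda>s. exp (2*K * s)) has_real_derivative exp (2*K * s) * (2*K)) (at s)"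
      by (auto intro!: derivative_eq_intros)
    have e2: "((\<lambda>s. x s \<bullet> x s) has_real_derivative (x s \<bullet> (M *v x s) + (M *v x s) \<bullet> x s)) (at s)"
      using bounded_bilinear.has_vector_derivative[OF bounded_bilinear_inner xd xd]
      by (simp add: has_real_derivative_iff_has_vector_derivative)
    have D: "(q has_real_derivative (exp (2*K * s) * (2*K) * (x s \<bullet> x s) + exp (2*K * s) * (x s \<bullet> (M *v x s) + (M *v x s) \<bullet> x s))) (at s)"
      unfolding q_def using DERIV_mult[OF e1 e2] by (simp add: algebra_simps)
    have "K * (x s \<bullet> x s) + x s \<bullet> (M *v x s) \<ge> 0"
    proof -
      have "- (x s \<bullet> (M *v x s)) \<le> norm (x s) * norm (M *v x s)"
        using norm_cauchy_schwarz[of "x s" "- (M *v x s)"] by simp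
      also have "\<dots> \<le> norm (x s) * (K * norm (x s))" by (intro mult_left_mono K(2)) simp
      finally show ?thesis by (simp add: dot_square_norm power2_eq_square algebra_simps)
    qed
    then have "0 \<le> exp (2*K * s) * (2 * (K * (x s \<bullet> x s) + x s \<bullet> (M *v x s)))" by simp
    also have "exp (2*K * s) * (2 * (K * (x s \<bullet> x s) + x s \<bullet> (M *v x s)))
       = exp (2*K * s) * (2*K) * (x s \<bullet> x s) + exp (2*K * s) * (x s \<bullet> (M *v x s) + (M *v x s) \<bullet> x s)"
      by (simp add: inner_commute algebra_simps)
    finally show "\<exists>y. (q has_real_derivative y) (at s) \<and> y \<ge> 0" using D by blast
  qed
  moreover have "q 0 > 0" using assms(1) by (simp add: q_def x_def)
  ultimately have "q t > 0" by linarith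
  then show ?thesis by (auto simp: q_def x_def)
qed

lemma linsol_lipschitz:
  assumes "0 \<le> a"
  shows "\<exists>L. \<forall>u\<in>{0..a}. \<forall>v\<in>{0..a}. norm (linsol M x0 v - linsol M x0 u) \<le> L * \<bar>v - u\<bar>"
proof -
  obtain K where K: "K > 0" "\<And>v. norm (M *v v) \<le> K * norm v" using mat_bound by blast
  have "compact (linsol M x0 ` {0..a})" by (intro compact_continuous_image linsol_cont) simp
  then obtain B where B: "\<And>s. s \<in> {0..a} \<Longrightarrow> norm (linsol M x0 s) \<le> B"
    using compact_imp_bounded bounded_iff by (metis imageI)
  have main: "norm (linsol M x0 v - linsol M x0 u) \<le> (K*B) * (v - u)" if uv: "u \<in> {0..a}" "v \<in> {0..a}" "u < v" for u v
  proof -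
    have "norm (linsol M x0 v - linsol M x0 u) \<le> (K*B) * v - (K*B) * u"
    proof (rule differentiable_bound_general[OF uv(3)])
      show "continuous_on {u..v} (linsol M x0)" by (rule linsol_cont)
      show "continuous_on {u..v} (\<lambda>s. (K*B) * s)" by (intro continuous_intros)
      show "(linsol M x0 has_vector_derivative (M *v linsol M x0 s)) (at s)" for s using linsol_deriv .
      show "((\<lambda>s. (K*B) * s) has_vector_derivative (K*B)) (at s)" for s
        using has_real_derivative_iff_has_vector_derivative[THEN iffD1, OF DERIV_cmult_Id] by simp
      fix s assume "u < s" "s < v"
      then have "s \<in> {0..a}" using uv by auto
      then have "norm (linsol M x0 s) \<le> B" by (rule B)
      then show "norm (M *v linsol M x0 s) \<le> K*B" using K by (meson K(2) mult_left_mono order.trans less_imp_le)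
    qed
    then show ?thesis by (simp add: algebra_simps)
  qed
  show ?thesis
  proof (intro exI[of _ "K*B"] ballI)
    fix u v assume uv: "u \<in> {0..a}" "v \<in> {0..a}"
    consider "u < v" | "v < u" | "u = v" by linarith
    then show "norm (linsol M x0 v - linsol M x0 u) \<le> K * B * \<bar>v - u\<bar>"
    proof cases
      case 1 then show ?thesis using main[OF uv 1] by simp
    next
      case 2 then show ?thesis using main[OF uv(2,1) 2] by (simp add: norm_minus_commute)
    qed simp
  qed
qed




lemma lipschitz_ac:
  fixes f :: "real \<Rightarrow> 'a::real_normed_vector"
  assumes L: "\<forall>u\<in>S. \<forall>v\<in>S. norm (f v - f u) \<le> L * \<bar>v - u\<bar>"
  shows "abs_cont_on S f"
  unfolding abs_cont_on_def
proof (intro allI impI)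
  fix e :: real assume e: "e > 0"
  show "\<exists>\<delta>>0. \<forall>(N::nat) (u::nat \<Rightarrow> real) v.
        (\<forall>k<N. u k \<in> S \<and> v k \<in> S \<and> u k \<le> v k) \<and>
        (\<forall>j<N. \<forall>k<N. j \<noteq> k \<longrightarrow> v j \<le> u k \<or> v k \<le> u j) \<and>
        (\<Sum>k<N. v k - u k) < \<delta>
        \<longrightarrow> (\<Sum>k<N. norm (f (v k) - f (u k))) < e"
  proof (intro exI[of _ "e / (\<bar>L\<bar> + 1)"] conjI allI impI)
    show "e / (\<bar>L\<bar> + 1) > 0" using e by simp
    fix N :: nat and u v :: "nat \<Rightarrow> real"
    assume h: "(\<forall>k<N. u k \<in> S \<and> v k \<in> S \<and> u k \<le> v k) \<and>
        (\<forall>j<N. \<forall>k<N. j \<noteq> k \<longrightarrow> v j \<le> u k \<or> v k \<le> u j) \<and>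
        (\<Sum>k<N. v k - u k) < e / (\<bar>L\<bar> + 1)"
    have "(\<Sum>k<N. norm (f (v k) - f (u k))) \<le> (\<Sum>k<N. \<bar>L\<bar> * (v k - u k))"
    proof (rule sum_mono)
      fix k assume "k \<in> {..<N}"
      then have k: "u k \<in> S" "v k \<in> S" "u k \<le> v k" using h by auto
      have "norm (f (v k) - f (u k)) \<le> L * \<bar>v k - u k\<bar>" using L k by blast
      also have "\<dots> \<le> \<bar>L\<bar> * (v k - u k)" using k(3) by (simp add: mult_right_mono)
      finally show "norm (f (v k) - f (u k)) \<le> \<bar>L\<bar> * (v k - u k)" .
    qed
    also have "\<dots> = \<bar>L\<bar> * (\<Sum>k<N. v k - u k)" by (simp add: sum_distrib_left)
    also have "\<dots> \<le> \<bar>L\<bar> * (e / (\<bar>L\<bar> + 1))" using h by (intro mult_left_mono) auto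
    also have "\<dots> < e"
    proof -
      have "\<bar>L\<bar> * (e / (\<bar>L\<bar> + 1)) = e * (\<bar>L\<bar> / (\<bar>L\<bar> + 1))" by simp
      also have "\<dots> < e * 1" using e by (intro mult_strict_left_mono) auto
      finally show ?thesis by simp
    qed
    finally show "(\<Sum>k<N. norm (f (v k) - f (u k))) < e" .
  qed
qed

lemma diag_mult1: "(diag_mat g *v z) $ i = g $ i * z $ i"
proof -
  have "(diag_mat g *v z) $ i = (\<Sum>j\<in>UNIV. (if i = j then g $ i else 0) * z $ j)"
    unfolding matrix_vector_mult_def diag_mat_def by simp
  also have "\<dots> = (\<Sum>j\<in>UNIV. (if i = j then g $ j * z $ j else 0))"
    by (rule sum.cong) auto
  also have "\<dots> = g $ i * z $ i" by simp
  finally show ?thesis .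
qed

lemma diag_mult: "diag_mat g *v z = (\<chi> i. g $ i * z $ i)"
  by (simp add: vec_eq_iff diag_mult1)

lemma quad_form:
  fixes D :: "real^'p^'p"
  shows "v \<bullet> ((diag_mat g ** D + transpose D ** diag_mat g) *v v) = 2 * (\<Sum>i\<in>UNIV. g $ i * v $ i * (D *v v) $ i)"
proof -
  have "v \<bullet> ((diag_mat g ** D + transpose D ** diag_mat g) *v v)
     = v \<bullet> (diag_mat g *v (D *v v)) + v \<bullet> (transpose D *v (diag_mat g *v v))"
    by (simp add: matrix_vector_mult_add_rdistrib matrix_vector_mul_assoc inner_add_right)
  also have "v \<bullet> (transpose D *v (diag_mat g *v v)) = (diag_mat g *v v) \<bullet> (D *v v)"
  proof -
    have "v \<bullet> (transpose D *v (diag_mat g *v v)) = v \<bullet> ((diag_mat g *v v) v* D)"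
      by (simp only: transpose_matrix_vector)
    also have "\<dots> = ((diag_mat g *v v) v* D) \<bullet> v" by (rule inner_commute)
    also have "\<dots> = (diag_mat g *v v) \<bullet> (D *v v)" by (rule dot_lmul_matrix)
    finally show ?thesis .
  qed
  finally show ?thesis
    by (simp add: diag_mult inner_vec_def sum_distrib_left algebra_simps flip: sum.distrib)
qed

lemma kras_box:
  fixes f :: "real \<Rightarrow> real"
  assumes r: "(f \<longlongrightarrow> l1) (at_right 0)" "l1 > 0" and l: "(f \<longlongrightarrow> l2) (at_left 0)" "l2 < 0"
  shows "\<exists>c>0. {-c..c} \<subseteq> kras f 0"
proof -
  define c where "c = min (l1/2) (-l2/2)"
  have c: "c > 0" using r(2) l(2) unfolding c_def by simp
  have "{-c..c} \<subseteq> closure (convex hull (f ` {0 - \<delta> .. 0 + \<delta>}))" if d: "\<delta> > 0" for \<delta>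
  proof -
    have "eventually (\<lambda>s. f s > l1/2) (at_right 0)" by (rule order_tendstoD(1)[OF r(1)]) (use r(2) in simp)
    then obtain b1 where b1: "b1 > 0" "\<And>s. 0 < s \<Longrightarrow> s < b1 \<Longrightarrow> f s > l1/2"
      unfolding eventually_at_right_field by auto
    have "eventually (\<lambda>s. f s < l2/2) (at_left 0)" by (rule order_tendstoD(2)[OF l(1)]) (use l(2) in simp)
    then obtain b2 where b2: "b2 < 0" "\<And>s. b2 < s \<Longrightarrow> s < 0 \<Longrightarrow> f s < l2/2"
      unfolding eventually_at_left_field by auto
    define s1 where "s1 = min b1 \<delta> / 2"
    define s2 where "s2 = max b2 (-\<delta>) / 2"
    have s1: "f s1 > l1/2" "s1 \<in> {0 - \<delta> .. 0 + \<delta>}" using b1 d unfolding s1_def by auto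
    have s2: "f s2 < l2/2" "s2 \<in> {0 - \<delta> .. 0 + \<delta>}" using b2 d unfolding s2_def by auto
    have "{f s2 .. f s1} = closed_segment (f s2) (f s1)"
      using s1 s2 l(2) r(2) by (simp add: closed_segment_eq_real_ivl)
    also have "\<dots> \<subseteq> convex hull (f ` {0 - \<delta> .. 0 + \<delta>})"
    proof (rule closed_segment_subset_convex_hull)
      show "f s2 \<in> convex hull (f ` {0 - \<delta> .. 0 + \<delta>})" by (rule hull_inc) (use s2 in auto)
      show "f s1 \<in> convex hull (f ` {0 - \<delta> .. 0 + \<delta>})" by (rule hull_inc) (use s1 in auto)
    qed
    also have "\<dots> \<subseteq> closure (convex hull (f ` {0 - \<delta> .. 0 + \<delta>}))" by (rule closure_subset)
    finally have "{f s2 .. f s1} \<subseteq> closure (convex hull (f ` {0 - \<delta> .. 0 + \<delta>}))" .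
    moreover have "{-c..c} \<subseteq> {f s2 .. f s1}" using s1(1) s2(1) unfolding c_def by auto
    ultimately show ?thesis by blast
  qed
  then have "{-c..c} \<subseteq> kras f 0" unfolding kras_def by blast
  then show ?thesis using c by blast
qed

lemma linsol_kernel':
  fixes C :: "real^'n^'p"
  assumes "\<And>v. C *v (M *v v) = 0" "C *v x0 = 0"
  shows "C *v linsol M x0 t = 0"
proof -
  have a: "C *v apow M x0 n = 0" for n
    by (cases n) (simp_all add: assms apow_Suc)
  show ?thesis by (simp add: vec_eq_iff linsol_mult a)
qed

lemma linsol_is_sol:
  assumes T: "0 < T" and F: "\<And>t. 0 < t \<Longrightarrow> ereal t < T \<Longrightarrow> M *v linsol M x0 t \<in> F (linsol M x0 t)"
  shows "is_sol F (linsol M x0) T"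
  unfolding is_sol_def
proof (intro conjI allI impI)
  show "0 < T" by (rule T)
  fix t :: real assume "0 \<le> t \<and> ereal t < T"
  then obtain L where "\<forall>u\<in>{0..t}. \<forall>v\<in>{0..t}. norm (linsol M x0 v - linsol M x0 u) \<le> L * \<bar>v - u\<bar>"
    using linsol_lipschitz by blast
  then show "abs_cont_on {0..t} (linsol M x0)" by (rule lipschitz_ac)
next
  show "AE t in lborel. 0 < t \<and> ereal t < T \<longrightarrow> (\<exists>v. (linsol M x0 has_vector_derivative v) (at t) \<and> v \<in> F (linsol M x0 t))"
  proof (rule AE_I2, intro impI)
    fix t assume "0 < t \<and> ereal t < T"
    then show "\<exists>v. (linsol M x0 has_vector_derivative v) (at t) \<and> v \<in> F (linsol M x0 t)"
      by (intro exI[of _ "M *v linsol M x0 t"] conjI linsol_deriv F) auto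
  qed
qed




lemma dir1:
  fixes A :: "real^'n^'n" and B :: "real^'p^'n" and C :: "real^'n^'p" and psi :: "'p \<Rightarrow> real \<Rightarrow> real"
  assumes a3: "assumption3 A B C psi" and sf: "SFTS (lure_F A B C psi)"
  shows "invertible C"
proof (rule ccontr)
  assume nC: "\<not> invertible C"
  define D where "D = C ** B"
  from a3 obtain \<gamma> :: "real^'p" where \<gamma>: "\<forall>i. \<gamma> $ i > 0"
    and pd: "\<forall>v. v \<noteq> 0 \<longrightarrow> v \<bullet> ((diag_mat \<gamma> ** D + transpose D ** diag_mat \<gamma>) *v v) > 0"
    and gas: "GAS (lure_F A B C psi)"
    and lims: "\<forall>i. (\<exists>l>0. (psi i \<longlongrightarrow> l) (at_right 0)) \<and> (\<exists>l<0. (psi i \<longlongrightarrow> l) (at_left 0))"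
    unfolding assumption3_def Let_def D_def by blast
  have Dinj: "v = 0" if Dv: "D *v v = 0" for v
  proof (rule ccontr)
    assume "v \<noteq> 0"
    then have "0 < v \<bullet> ((diag_mat \<gamma> ** D + transpose D ** diag_mat \<gamma>) *v v)" using pd by blast
    also have "\<dots> = 2 * (\<Sum>i\<in>UNIV. \<gamma> $ i * v $ i * (D *v v) $ i)" by (rule quad_form)
    also have "\<dots> = 0" using Dv by simp
    finally show False by simp
  qed
  obtain Di where Di: "Di ** D = mat 1" using matrix_left_invertible_ker[of D] Dinj by blast
  then have DDi: "D ** Di = mat 1" using matrix_left_right_inverse by blast
  define R where "R = B ** Di"
  have CR: "C ** R = mat 1" unfolding R_def by (simp add: matrix_mul_assoc D_def[symmetric] DDi)
  have noleft: "\<not> (\<exists>Cl. Cl ** C = mat 1)"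
  proof
    assume "\<exists>Cl. Cl ** C = mat 1"
    then obtain Cl where Cl: "Cl ** C = mat 1" by blast
    have "Cl = Cl ** (C ** R)" by (simp add: CR)
    also have "\<dots> = (Cl ** C) ** R" by (rule matrix_mul_assoc)
    also have "\<dots> = R" by (simp add: Cl)
    finally have "Cl = R" .
    then have "invertible C" unfolding invertible_def using Cl CR by blast
    then show False using nC by blast
  qed
  obtain z where z: "C *v z = 0" "z \<noteq> 0"
    using noleft matrix_left_invertible_ker[of C] by blast
  define K where "K = Di ** (C ** A)"
  define M where "M = A - B ** K"
  have Mv: "M *v v = A *v v - B *v (K *v v)" for v
    by (simp add: M_def matrix_vector_mult_diff_rdistrib matrix_vector_mul_assoc)
  have e1: "C *v (B *v w) = D *v w" for w by (simp add: D_def matrix_vector_mul_assoc)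
  have e2: "D *v (K *v v) = C *v (A *v v)" for v
    by (simp add: K_def matrix_vector_mul_assoc matrix_mul_assoc DDi)
  have CM: "C *v (M *v v) = 0" for v
    by (simp add: Mv matrix_vector_mult_diff_distrib e1 e2)
  have "\<forall>i. \<exists>c. c > 0 \<and> {-c..c} \<subseteq> kras (psi i) 0"
  proof
    fix i
    from lims obtain l1 l2 where l: "l1 > 0" "(psi i \<longlongrightarrow> l1) (at_right 0)" "l2 < 0" "(psi i \<longlongrightarrow> l2) (at_left 0)"
      by blast
    show "\<exists>c. c > 0 \<and> {-c..c} \<subseteq> kras (psi i) 0" using kras_box[OF l(2,1) l(4,3)] by blast
  qed
  then obtain cf where cf: "\<forall>i. cf i > 0 \<and> {-cf i..cf i} \<subseteq> kras (psi i) 0" by (metis choice)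
  define c where "c = Min (range cf)"
  have c: "c > 0" unfolding c_def using cf by simp
  have cle: "c \<le> cf i" for i unfolding c_def by (rule Min_le) auto
  have box: "w \<in> kras_vec psi 0" if wc: "\<forall>i. \<bar>w $ i\<bar> \<le> c" for w
    unfolding kras_vec_def
  proof (intro CollectI allI)
    fix i
    have "\<bar>w $ i\<bar> \<le> cf i" using wc cle[of i] by (meson order_trans)
    then have "w $ i \<in> {-cf i..cf i}" by (auto simp: abs_le_iff)
    moreover have "{-cf i..cf i} \<subseteq> kras (psi i) 0" using cf by blast
    ultimately show "w $ i \<in> kras (psi i) (0 $ i)" by auto
  qed
  obtain kK where kK: "kK > 0" "\<And>v. norm (K *v v) \<le> kK * norm v" using mat_bound by blast
  define R0 where "R0 = c / kK"
  have R0: "R0 > 0" unfolding R0_def using c kK by simp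
  have inF: "M *v x \<in> lure_F A B C psi x" if xh: "C *v x = 0" "norm x < R0" for x
  proof -
    have "\<bar>(K *v x) $ i\<bar> \<le> c" for i
    proof -
      have "\<bar>(K *v x) $ i\<bar> \<le> norm (K *v x)" by (rule component_le_norm_cart)
      also have "\<dots> \<le> kK * norm x" by (rule kK(2))
      also have "\<dots> \<le> kK * R0" using xh(2) kK(1) by simp
      also have "\<dots> = c" unfolding R0_def using kK(1) by simp
      finally show ?thesis .
    qed
    then have "K *v x \<in> kras_vec psi (C *v x)" using box xh(1) by simp
    then show ?thesis unfolding lure_F_def using Mv by blast
  qed
  from gas obtain \<beta> where \<beta>: "classKL \<beta>"
    "\<forall>x T. is_sol (lure_F A B C psi) x T \<longrightarrow> (\<forall>t. 0 \<le> t \<and> ereal t < T \<longrightarrow> norm (x t) \<le> \<beta> (norm (x 0)) t)"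
    unfolding GAS_def by blast
  have cK: "classK (\<lambda>r. \<beta> r 0)" using \<beta>(1) unfolding classKL_def by simp
  then have bc: "continuous_on {0..} (\<lambda>r. \<beta> r 0)" and b00: "\<beta> 0 0 = 0" unfolding classK_def by auto
  have bmono: "\<beta> r t \<le> \<beta> r 0" if "r \<ge> 0" "t \<ge> 0" for r t
  proof -
    have "antimono_on {0..} (\<beta> r)" using \<beta>(1) that(1) unfolding classKL_def by blast
    then show ?thesis using that(2) by (auto simp: monotone_on_def)
  qed
  obtain d where d: "d > 0" "\<And>r. r \<in> {0..} \<Longrightarrow> dist r 0 < d \<Longrightarrow> dist (\<beta> r 0) (\<beta> 0 0) < R0"
    using bc R0 unfolding continuous_on_iff by (meson atLeast_iff order_refl)
  define s where "s = min d R0 / 2"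
  have s: "s > 0" "s < R0" "s < d" using d(1) R0 unfolding s_def by auto
  define x0 where "x0 = (s / norm z) *\<^sub>R z"
  have nx0: "norm x0 = s" unfolding x0_def using s(1) z(2) by simp
  have Cx0: "C *v x0 = 0" by (simp add: x0_def matrix_vector_mult_scaleR z(1))
  have x0nz: "x0 \<noteq> 0" using nx0 s(1) by auto
  have bs: "\<beta> s 0 < R0" using d(2)[of s] s b00 by (simp add: dist_real_def)
  define x where "x = linsol M x0"
  have xker: "C *v x t = 0" for t unfolding x_def by (rule linsol_kernel'[OF CM Cx0])
  have x00: "x 0 = x0" unfolding x_def by simp
  have xcont: "isCont x t" for t unfolding x_def by (rule has_vector_derivative_continuous[OF linsol_deriv])
  have xcon: "continuous_on UNIV x" unfolding x_def by (rule linsol_cont)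
  have bound: "norm (x t) < R0" if t0: "t \<ge> 0" for t
  proof (rule ccontr)
    assume nt: "\<not> norm (x t) < R0"
    define S where "S = {t. 0 \<le> t \<and> R0 \<le> norm (x t)}"
    have Sne: "S \<noteq> {}" using t0 nt unfolding S_def by auto
    have Sbdd: "bdd_below S" unfolding S_def by (rule bdd_belowI[of _ 0]) auto
    have Scl: "closed S"
    proof -
      have "S = {t. 0 \<le> t} \<inter> {t. R0 \<le> norm (x t)}" unfolding S_def by auto
      moreover have "closed {t::real. 0 \<le> t}" by (rule closed_Collect_le) (intro continuous_intros)+
      moreover have "closed {t. R0 \<le> norm (x t)}"
        by (rule closed_Collect_le) (intro continuous_intros xcon)+
      ultimately show ?thesis by auto
    qed
    define \<tau> where "\<tau> = Inf S"
    have \<tau>S: "\<tau> \<in> S" unfolding \<tau>_def by (rule closed_contains_Inf[OF Sne Sbdd Scl])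
    have below: "norm (x t') < R0" if "0 \<le> t'" "t' < \<tau>" for t'
    proof (rule ccontr)
      assume "\<not> norm (x t') < R0"
      then have "t' \<in> S" using that unfolding S_def by auto
      then have "\<tau> \<le> t'" unfolding \<tau>_def by (rule cInf_lower[OF _ Sbdd])
      then show False using that by simp
    qed
    have \<tau>pos: "\<tau> > 0"
    proof -
      have "\<tau> \<ge> 0" using \<tau>S unfolding S_def by auto
      moreover have "\<tau> \<noteq> 0" using \<tau>S s(2) unfolding S_def by (auto simp: x00 nx0)
      ultimately show ?thesis by simp
    qed
    have sol: "is_sol (lure_F A B C psi) x (ereal \<tau>)"
      unfolding x_def
    proof (rule linsol_is_sol)
      show "0 < ereal \<tau>" using \<tau>pos by simp
      fix t' assume "0 < t'" "ereal t' < ereal \<tau>"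
      then show "M *v linsol M x0 t' \<in> lure_F A B C psi (linsol M x0 t')"
        using inF[OF xker below] unfolding x_def by simp
    qed
    have le: "norm (x t') \<le> \<beta> s 0" if "0 \<le> t'" "t' < \<tau>" for t'
    proof -
      have "norm (x t') \<le> \<beta> (norm (x 0)) t'" using \<beta>(2) sol that by simp
      also have "\<dots> = \<beta> s t'" by (simp add: x00 nx0)
      also have "\<dots> \<le> \<beta> s 0" using bmono s(1) that(1) by simp
      finally show ?thesis .
    qed
    have lim: "((\<lambda>t. norm (x t)) \<longlongrightarrow> norm (x \<tau>)) (at_left \<tau>)"
    proof -
      have "(x \<longlongrightarrow> x \<tau>) (at \<tau>)" using xcont[of \<tau>] by (simp add: isCont_def)
      then have "(x \<longlongrightarrow> x \<tau>) (at_left \<tau>)" by (rule tendsto_mono[OF at_le[OF subset_UNIV]])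
      then show ?thesis by (rule tendsto_norm)
    qed
    have ev: "eventually (\<lambda>t. norm (x t) \<le> \<beta> s 0) (at_left \<tau>)"
      using eventually_at_left_real[OF \<tau>pos] by (rule eventually_mono) (auto intro: le)
    have "norm (x \<tau>) \<le> \<beta> s 0" by (rule tendsto_upperbound[OF lim ev]) simp
    then have "norm (x \<tau>) < R0" using bs by simp
    then show False using \<tau>S unfolding S_def by simp
  qed
  have solinf: "is_sol (lure_F A B C psi) x \<infinity>"
    unfolding x_def
  proof (rule linsol_is_sol)
    show "0 < (\<infinity>::ereal)" by simp
    fix t' assume "0 < t'" "ereal t' < \<infinity>"
    then show "M *v linsol M x0 t' \<in> lure_F A B C psi (linsol M x0 t')"
      using inF[OF xker bound[of t']] unfolding x_def by simp
  qed
  from sf solinf obtain T0 where T0: "T0 \<ge> 0" "\<forall>t. T0 \<le> t \<and> ereal t < \<infinity> \<longrightarrow> x t = 0"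
    unfolding SFTS_def by blast
  then have "x T0 = 0" by simp
  moreover have "x T0 \<noteq> 0" unfolding x_def by (rule linsol_nonzero[OF x0nz T0(1)])
  ultimately show False by simp
qed




definition Lf :: "real \<Rightarrow> real \<Rightarrow> real \<Rightarrow> real" where
  "Lf a b s = (if s \<ge> 0 then a * s else b * s)"

definition whf :: "real \<Rightarrow> real \<Rightarrow> real \<Rightarrow> real" where
  "whf a b s = (if s > 0 then a else if s < 0 then b else 0)"

lemma Lf_bound: "\<bar>Lf a b z\<bar> \<le> (\<bar>a\<bar> + \<bar>b\<bar>) * \<bar>z\<bar>"
  by (auto simp: Lf_def abs_mult intro: mult_right_mono)

lemma Lf_lip: "\<bar>Lf a b z - Lf a b z'\<bar> \<le> (\<bar>a\<bar> + \<bar>b\<bar>) * \<bar>z - z'\<bar>"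
proof -
  consider "z \<ge> 0" "z' \<ge> 0" | "z \<ge> 0" "z' < 0" | "z < 0" "z' \<ge> 0" | "z < 0" "z' < 0" by linarith
  then show ?thesis
  proof cases
    case 1
    then have "\<bar>Lf a b z - Lf a b z'\<bar> = \<bar>a\<bar> * \<bar>z - z'\<bar>" by (simp add: Lf_def abs_mult flip: right_diff_distrib)
    then show ?thesis by (simp add: mult_right_mono)
  next
    case 2
    have "\<bar>Lf a b z - Lf a b z'\<bar> = \<bar>a * z - b * z'\<bar>" using 2 by (simp add: Lf_def)
    also have "\<dots> \<le> \<bar>a\<bar> * \<bar>z\<bar> + \<bar>b\<bar> * \<bar>z'\<bar>" using abs_triangle_ineq4[of "a*z" "b*z'"] by (simp add: abs_mult)
    also have "\<dots> \<le> (\<bar>a\<bar> + \<bar>b\<bar>) * \<bar>z - z'\<bar>"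
    proof -
      have "\<bar>z\<bar> \<le> \<bar>z - z'\<bar>" "\<bar>z'\<bar> \<le> \<bar>z - z'\<bar>" using 2 by auto
      then show ?thesis by (simp add: distrib_right add_mono mult_left_mono)
    qed
    finally show ?thesis .
  next
    case 3
    have "\<bar>Lf a b z - Lf a b z'\<bar> = \<bar>b * z - a * z'\<bar>" using 3 by (simp add: Lf_def)
    also have "\<dots> \<le> \<bar>b\<bar> * \<bar>z\<bar> + \<bar>a\<bar> * \<bar>z'\<bar>" using abs_triangle_ineq4[of "b*z" "a*z'"] by (simp add: abs_mult)
    also have "\<dots> \<le> (\<bar>a\<bar> + \<bar>b\<bar>) * \<bar>z - z'\<bar>"
    proof -
      have "\<bar>z\<bar> \<le> \<bar>z - z'\<bar>" "\<bar>z'\<bar> \<le> \<bar>z - z'\<bar>" using 3 by auto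
      then show ?thesis by (simp add: distrib_right add_mono mult_left_mono add.commute)
    qed
    finally show ?thesis .
  next
    case 4
    then have "\<bar>Lf a b z - Lf a b z'\<bar> = \<bar>b\<bar> * \<bar>z - z'\<bar>" by (simp add: Lf_def abs_mult flip: right_diff_distrib)
    then show ?thesis by (simp add: mult_right_mono)
  qed
qed

lemma chain_L:
  fixes h :: "real \<Rightarrow> real"
  assumes hd: "(h has_real_derivative dh) (at t)" and alt: "h t \<noteq> 0 \<or> dh = 0"
  shows "((\<lambda>s. Lf a b (h s)) has_real_derivative (whf a b (h t) * dh)) (at t)"
proof -
  have hc: "(h \<longlongrightarrow> h t) (nhds t)"
    using DERIV_isCont[OF hd] by (simp add: isCont_def tendsto_at_iff_tendsto_nhds)
  consider "h t > 0" | "h t < 0" | "h t = 0" by linarith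
  then show ?thesis
  proof cases
    case 1
    have ev: "eventually (\<lambda>s. Lf a b (h s) = a * h s) (nhds t)"
      using order_tendstoD(1)[OF hc 1] by (rule eventually_mono) (simp add: Lf_def)
    have "((\<lambda>s. a * h s) has_real_derivative a * dh) (at t)" by (rule DERIV_cmult[OF hd])
    then show ?thesis using DERIV_cong_ev[OF refl ev refl] 1 by (simp add: whf_def)
  next
    case 2
    have ev: "eventually (\<lambda>s. Lf a b (h s) = b * h s) (nhds t)"
      using order_tendstoD(2)[OF hc 2] by (rule eventually_mono) (simp add: Lf_def)
    have "((\<lambda>s. b * h s) has_real_derivative b * dh) (at t)" by (rule DERIV_cmult[OF hd])
    then show ?thesis using DERIV_cong_ev[OF refl ev refl] 2 by (simp add: whf_def)
  next
    case 3
    then have dh0: "dh = 0" using alt by simp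
    have q: "((\<lambda>s. (h s - h t) / (s - t)) \<longlongrightarrow> 0) (at t)"
      using hd dh0 by (simp add: has_field_derivative_iff)
    have "((\<lambda>s. (Lf a b (h s) - Lf a b (h t)) / (s - t)) \<longlongrightarrow> 0) (at t)"
    proof (rule Lim_null_comparison)
      show "eventually (\<lambda>s. norm ((Lf a b (h s) - Lf a b (h t)) / (s - t)) \<le> (\<bar>a\<bar> + \<bar>b\<bar>) * \<bar>(h s - h t) / (s - t)\<bar>) (at t)"
      proof (rule always_eventually, intro allI)
        fix s
        have "\<bar>Lf a b (h s)\<bar> \<le> (\<bar>a\<bar> + \<bar>b\<bar>) * \<bar>h s\<bar>" by (rule Lf_bound)
        then have "\<bar>Lf a b (h s)\<bar> / \<bar>s - t\<bar> \<le> (\<bar>a\<bar> + \<bar>b\<bar>) * \<bar>h s\<bar> / \<bar>s - t\<bar>"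
          by (rule divide_right_mono) simp
        then show "norm ((Lf a b (h s) - Lf a b (h t)) / (s - t)) \<le> (\<bar>a\<bar> + \<bar>b\<bar>) * \<bar>(h s - h t) / (s - t)\<bar>"
          using 3 by (simp add: Lf_def abs_divide)
      qed
      show "((\<lambda>s. (\<bar>a\<bar> + \<bar>b\<bar>) * \<bar>(h s - h t) / (s - t)\<bar>) \<longlongrightarrow> 0) (at t)"
        using tendsto_mult_right_zero[OF tendsto_rabs_zero[OF q]] by simp
    qed
    then have "((\<lambda>s. Lf a b (h s)) has_real_derivative 0) (at t)" by (simp add: has_field_derivative_iff)
    then show ?thesis using dh0 by simp
  qed
qed

lemma countable_isolated:
  fixes Z :: "real set"
  assumes iso: "\<And>t. t \<in> Z \<Longrightarrow> \<exists>r>0. \<forall>s\<in>Z. s \<noteq> t \<longrightarrow> r \<le> \<bar>s - t\<bar>"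
  shows "countable Z"
proof -
  define r where "r t = (SOME r. r > 0 \<and> (\<forall>s\<in>Z. s \<noteq> t \<longrightarrow> r \<le> \<bar>s - t\<bar>))" for t
  have r: "r t > 0 \<and> (\<forall>s\<in>Z. s \<noteq> t \<longrightarrow> r t \<le> \<bar>s - t\<bar>)" if "t \<in> Z" for t
    unfolding r_def by (rule someI_ex) (rule iso[OF that])
  define B where "B t = ball t (r t / 2)" for t
  have inj: "inj_on B Z"
  proof (rule inj_onI)
    fix t t' assume tt: "t \<in> Z" "t' \<in> Z" "B t = B t'"
    have "t \<in> B t" using r[OF tt(1)] unfolding B_def by simp
    then have "t \<in> B t'" using tt(3) by simp
    then have "\<bar>t - t'\<bar> < r t' / 2" unfolding B_def by (simp add: dist_real_def abs_minus_commute)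
    then show "t = t'" using r[OF tt(2)] tt(1) by fastforce
  qed
  have "countable (B ` Z)"
  proof (rule countable_disjoint_open_subsets)
    show "open S" if "S \<in> B ` Z" for S using that unfolding B_def by auto
    show "pairwise disjnt (B ` Z)"
      unfolding pairwise_def
    proof (intro ballI impI)
      fix S1 S2 assume S: "S1 \<in> B ` Z" "S2 \<in> B ` Z" "S1 \<noteq> S2"
      then obtain t1 t2 where t: "t1 \<in> Z" "t2 \<in> Z" "S1 = B t1" "S2 = B t2" by blast
      then have "t1 \<noteq> t2" using S(3) by blast
      then have d: "r t1 \<le> \<bar>t2 - t1\<bar>" "r t2 \<le> \<bar>t1 - t2\<bar>" using r t by auto
      show "disjnt S1 S2" unfolding disjnt_def
      proof (rule ccontr)
        assume "S1 \<inter> S2 \<noteq> {}"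
        then obtain y where "y \<in> B t1" "y \<in> B t2" using t by blast
        then have "\<bar>y - t1\<bar> < r t1 / 2" "\<bar>y - t2\<bar> < r t2 / 2" unfolding B_def by (auto simp: dist_real_def abs_minus_commute)
        then show False using d by linarith
      qed
    qed
  qed
  then show ?thesis using countable_image_inj_on inj by blast
qed

lemma zero_set_countable:
  fixes h :: "real \<Rightarrow> real"
  shows "countable {t. \<exists>d. (h has_real_derivative d) (at t) \<and> h t = 0 \<and> d \<noteq> 0}"
proof (rule countable_isolated)
  fix t assume "t \<in> {t. \<exists>d. (h has_real_derivative d) (at t) \<and> h t = 0 \<and> d \<noteq> 0}"
  then obtain d where d: "(h has_real_derivative d) (at t)" "h t = 0" "d \<noteq> 0" by blast
  have "(h has_derivative (\<lambda>x. d * x)) (at t)" using d(1) by (simp add: has_field_derivative_def)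
  then have al: "\<forall>e>0. \<exists>r>0. \<forall>s. norm (s - t) < r \<longrightarrow> norm (h s - h t - d * (s - t)) \<le> e * norm (s - t)"
    using has_derivative_at_alt by blast
  have "\<bar>d\<bar>/2 > 0" using d(3) by simp
  then obtain r where r: "r > 0" "\<forall>s. norm (s - t) < r \<longrightarrow> norm (h s - h t - d * (s - t)) \<le> (\<bar>d\<bar>/2) * norm (s - t)"
    using al by blast
  show "\<exists>r>0. \<forall>s\<in>{t. \<exists>d. (h has_real_derivative d) (at t) \<and> h t = 0 \<and> d \<noteq> 0}. s \<noteq> t \<longrightarrow> r \<le> \<bar>s - t\<bar>"
  proof (intro exI[of _ r] conjI ballI impI)
    show "r > 0" by (rule r(1))
    fix s assume s: "s \<in> {t. \<exists>d. (h has_real_derivative d) (at t) \<and> h t = 0 \<and> d \<noteq> 0}" "s \<noteq> t"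
    show "r \<le> \<bar>s - t\<bar>"
    proof (rule ccontr)
      assume "\<not> r \<le> \<bar>s - t\<bar>"
      then have "\<bar>h s - h t - d * (s - t)\<bar> \<le> (\<bar>d\<bar>/2) * \<bar>s - t\<bar>" using r(2) by auto
      moreover have "h s = 0" using s(1) by blast
      ultimately have "\<bar>d\<bar> * \<bar>s - t\<bar> \<le> (\<bar>d\<bar>/2) * \<bar>s - t\<bar>" using d(2) by (simp add: abs_mult)
      moreover have "\<bar>s - t\<bar> > 0" using s(2) by simp
      ultimately show False using d(3) by (simp add: mult_le_cancel_right)
    qed
  qed
qed

lemma kras_sub:
  assumes d: "\<delta> > 0" and f: "\<And>s'. s - \<delta> \<le> s' \<Longrightarrow> s' \<le> s + \<delta> \<Longrightarrow> f s' \<in> {lo..hi}"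
  shows "kras f s \<subseteq> {lo..hi}"
proof -
  have "kras f s \<subseteq> closure (convex hull (f ` {s - \<delta> .. s + \<delta>}))"
    unfolding kras_def using d by blast
  also have "\<dots> \<subseteq> {lo..hi}"
  proof (rule closure_minimal)
    show "convex hull (f ` {s - \<delta> .. s + \<delta>}) \<subseteq> {lo..hi}"
      by (rule hull_minimal) (use f in auto)
  qed simp
  finally show ?thesis .
qed

lemma ac_subset: "abs_cont_on S f \<Longrightarrow> T \<subseteq> S \<Longrightarrow> abs_cont_on T f"
  unfolding abs_cont_on_def
proof (intro allI impI)
  fix e :: real assume ac: "\<forall>e>0. \<exists>\<delta>>0. \<forall>(N::nat) (u::nat \<Rightarrow> real) v.
        (\<forall>k<N. u k \<in> S \<and> v k \<in> S \<and> u k \<le> v k) \<and>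
        (\<forall>j<N. \<forall>k<N. j \<noteq> k \<longrightarrow> v j \<le> u k \<or> v k \<le> u j) \<and>
        (\<Sum>k<N. v k - u k) < \<delta>
        \<longrightarrow> (\<Sum>k<N. norm (f (v k) - f (u k))) < e" and TS: "T \<subseteq> S" and e: "e > 0"
  then obtain \<delta> where d: "\<delta> > 0" and P: "\<forall>(N::nat) (u::nat \<Rightarrow> real) v.
        (\<forall>k<N. u k \<in> S \<and> v k \<in> S \<and> u k \<le> v k) \<and>
        (\<forall>j<N. \<forall>k<N. j \<noteq> k \<longrightarrow> v j \<le> u k \<or> v k \<le> u j) \<and>
        (\<Sum>k<N. v k - u k) < \<delta>
        \<longrightarrow> (\<Sum>k<N. norm (f (v k) - f (u k))) < e" by blast
  show "\<exists>\<delta>>0. \<forall>(N::nat) (u::nat \<Rightarrow> real) v.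
        (\<forall>k<N. u k \<in> T \<and> v k \<in> T \<and> u k \<le> v k) \<and>
        (\<forall>j<N. \<forall>k<N. j \<noteq> k \<longrightarrow> v j \<le> u k \<or> v k \<le> u j) \<and>
        (\<Sum>k<N. v k - u k) < \<delta>
        \<longrightarrow> (\<Sum>k<N. norm (f (v k) - f (u k))) < e"
  proof (intro exI[of _ \<delta>] conjI allI impI)
    fix N :: nat and u v :: "nat \<Rightarrow> real"
    assume h: "(\<forall>k<N. u k \<in> T \<and> v k \<in> T \<and> u k \<le> v k) \<and>
        (\<forall>j<N. \<forall>k<N. j \<noteq> k \<longrightarrow> v j \<le> u k \<or> v k \<le> u j) \<and> (\<Sum>k<N. v k - u k) < \<delta>"
    then have "(\<forall>k<N. u k \<in> S \<and> v k \<in> S \<and> u k \<le> v k)" using TS by blast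
    then show "(\<Sum>k<N. norm (f (v k) - f (u k))) < e" using P h by blast
  qed (rule d)
qed

lemma ac_lip_comp:
  fixes f :: "real \<Rightarrow> 'a::real_normed_vector" and \<phi> :: "'a \<Rightarrow> real"
  assumes ac: "abs_cont_on S f" and lip: "\<And>a b. \<bar>\<phi> a - \<phi> b\<bar> \<le> L * norm (a - b)"
  shows "abs_cont_on S (\<lambda>t. \<phi> (f t))"
  unfolding abs_cont_on_def
proof (intro allI impI)
  fix e :: real assume e: "e > 0"
  define e' where "e' = e / (\<bar>L\<bar> + 1)"
  have e': "e' > 0" unfolding e'_def using e by simp
  from ac e' obtain \<delta> where d: "\<delta> > 0" and P: "\<forall>(N::nat) (u::nat \<Rightarrow> real) v.
        (\<forall>k<N. u k \<in> S \<and> v k \<in> S \<and> u k \<le> v k) \<and>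
        (\<forall>j<N. \<forall>k<N. j \<noteq> k \<longrightarrow> v j \<le> u k \<or> v k \<le> u j) \<and>
        (\<Sum>k<N. v k - u k) < \<delta>
        \<longrightarrow> (\<Sum>k<N. norm (f (v k) - f (u k))) < e'" unfolding abs_cont_on_def by blast
  show "\<exists>\<delta>>0. \<forall>(N::nat) (u::nat \<Rightarrow> real) v.
        (\<forall>k<N. u k \<in> S \<and> v k \<in> S \<and> u k \<le> v k) \<and>
        (\<forall>j<N. \<forall>k<N. j \<noteq> k \<longrightarrow> v j \<le> u k \<or> v k \<le> u j) \<and>
        (\<Sum>k<N. v k - u k) < \<delta>
        \<longrightarrow> (\<Sum>k<N. norm (\<phi> (f (v k)) - \<phi> (f (u k)))) < e"
  proof (intro exI[of _ \<delta>] conjI allI impI)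
    fix N :: nat and u v :: "nat \<Rightarrow> real"
    assume h: "(\<forall>k<N. u k \<in> S \<and> v k \<in> S \<and> u k \<le> v k) \<and>
        (\<forall>j<N. \<forall>k<N. j \<noteq> k \<longrightarrow> v j \<le> u k \<or> v k \<le> u j) \<and> (\<Sum>k<N. v k - u k) < \<delta>"
    have s: "(\<Sum>k<N. norm (f (v k) - f (u k))) < e'" using P h by blast
    have "(\<Sum>k<N. norm (\<phi> (f (v k)) - \<phi> (f (u k)))) \<le> (\<Sum>k<N. \<bar>L\<bar> * norm (f (v k) - f (u k)))"
    proof (rule sum_mono)
      fix k
      have "\<bar>\<phi> (f (v k)) - \<phi> (f (u k))\<bar> \<le> L * norm (f (v k) - f (u k))" by (rule lip)
      also have "\<dots> \<le> \<bar>L\<bar> * norm (f (v k) - f (u k))" by (simp add: mult_right_mono)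
      finally show "norm (\<phi> (f (v k)) - \<phi> (f (u k))) \<le> \<bar>L\<bar> * norm (f (v k) - f (u k))" by simp
    qed
    also have "\<dots> = \<bar>L\<bar> * (\<Sum>k<N. norm (f (v k) - f (u k)))" by (simp add: sum_distrib_left)
    also have "\<dots> \<le> \<bar>L\<bar> * e'" using s by (intro mult_left_mono) auto
    also have "\<dots> < e"
    proof -
      have "\<bar>L\<bar> * e' = e * (\<bar>L\<bar> / (\<bar>L\<bar> + 1))" unfolding e'_def by simp
      also have "\<dots> < e * 1" using e by (intro mult_strict_left_mono) auto
      finally show ?thesis by simp
    qed
    finally show "(\<Sum>k<N. norm (\<phi> (f (v k)) - \<phi> (f (u k)))) < e" .
  qed (rule d)
qed

lemma ac_add_lin:
  fixes f :: "real \<Rightarrow> real"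
  assumes ac: "abs_cont_on S f"
  shows "abs_cont_on S (\<lambda>t. f t + k * t)"
  unfolding abs_cont_on_def
proof (intro allI impI)
  fix e :: real assume e: "e > 0"
  have e2: "e/2 > 0" using e by simp
  from ac e2 obtain \<delta> where d: "\<delta> > 0" and P: "\<forall>(N::nat) (u::nat \<Rightarrow> real) v.
        (\<forall>k<N. u k \<in> S \<and> v k \<in> S \<and> u k \<le> v k) \<and>
        (\<forall>j<N. \<forall>k<N. j \<noteq> k \<longrightarrow> v j \<le> u k \<or> v k \<le> u j) \<and>
        (\<Sum>k<N. v k - u k) < \<delta>
        \<longrightarrow> (\<Sum>k<N. norm (f (v k) - f (u k))) < e/2"
    unfolding abs_cont_on_def by blast
  define \<delta>' where "\<delta>' = min \<delta> (e / (2 * (\<bar>k\<bar> + 1)))"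
  have d': "\<delta>' > 0" unfolding \<delta>'_def using d e by simp
  show "\<exists>\<delta>>0. \<forall>(N::nat) (u::nat \<Rightarrow> real) v.
        (\<forall>k<N. u k \<in> S \<and> v k \<in> S \<and> u k \<le> v k) \<and>
        (\<forall>j<N. \<forall>k<N. j \<noteq> k \<longrightarrow> v j \<le> u k \<or> v k \<le> u j) \<and>
        (\<Sum>k<N. v k - u k) < \<delta>
        \<longrightarrow> (\<Sum>i<N. norm ((f (v i) + k * v i) - (f (u i) + k * u i))) < e"
  proof (intro exI[of _ \<delta>'] conjI allI impI)
    fix N :: nat and u v :: "nat \<Rightarrow> real"
    assume h: "(\<forall>k<N. u k \<in> S \<and> v k \<in> S \<and> u k \<le> v k) \<and>
        (\<forall>j<N. \<forall>k<N. j \<noteq> k \<longrightarrow> v j \<le> u k \<or> v k \<le> u j) \<and> (\<Sum>k<N. v k - u k) < \<delta>'"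
    then have s: "(\<Sum>i<N. norm (f (v i) - f (u i))) < e/2" using P unfolding \<delta>'_def by auto
    have "(\<Sum>i<N. norm ((f (v i) + k * v i) - (f (u i) + k * u i))) \<le> (\<Sum>i<N. norm (f (v i) - f (u i)) + \<bar>k\<bar> * (v i - u i))"
    proof (rule sum_mono)
      fix i assume "i \<in> {..<N}"
      then have "u i \<le> v i" using h by auto
      then have kk: "\<bar>k * (v i - u i)\<bar> = \<bar>k\<bar> * (v i - u i)" by (simp add: abs_mult)
      have "(f (v i) + k * v i) - (f (u i) + k * u i) = (f (v i) - f (u i)) + k * (v i - u i)"
        by (simp add: algebra_simps)
      then have "\<bar>(f (v i) + k * v i) - (f (u i) + k * u i)\<bar> \<le> \<bar>f (v i) - f (u i)\<bar> + \<bar>k * (v i - u i)\<bar>"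
        using abs_triangle_ineq by metis
      then show "norm ((f (v i) + k * v i) - (f (u i) + k * u i)) \<le> norm (f (v i) - f (u i)) + \<bar>k\<bar> * (v i - u i)"
        using kk by simp
    qed
    also have "\<dots> = (\<Sum>i<N. norm (f (v i) - f (u i))) + \<bar>k\<bar> * (\<Sum>i<N. v i - u i)"
      by (simp add: sum.distrib sum_distrib_left)
    also have "\<dots> < e/2 + e/2"
    proof -
      have "\<bar>k\<bar> * (\<Sum>i<N. v i - u i) \<le> \<bar>k\<bar> * (e / (2 * (\<bar>k\<bar> + 1)))"
        using h unfolding \<delta>'_def by (intro mult_left_mono) auto
      also have "\<dots> \<le> e/2"
      proof -
        have "\<bar>k\<bar> * (e / (2 * (\<bar>k\<bar> + 1))) = (e/2) * (\<bar>k\<bar> / (\<bar>k\<bar> + 1))" by simp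
        also have "\<dots> \<le> (e/2) * 1" using e by (intro mult_left_mono) auto
        finally show ?thesis by simp
      qed
      finally show ?thesis using s by linarith
    qed
    finally show "(\<Sum>i<N. norm ((f (v i) + k * v i) - (f (u i) + k * u i))) < e" by simp
  qed (rule d')
qed




lemma quad_lower:
  fixes D :: "real^'p^'p"
  assumes pd: "\<forall>v. v \<noteq> 0 \<longrightarrow> v \<bullet> ((diag_mat g ** D + transpose D ** diag_mat g) *v v) > 0"
  shows "\<exists>lam>0. \<forall>v. (\<Sum>i\<in>UNIV. g $ i * v $ i * (D *v v) $ i) \<ge> lam * (norm v)^2"
proof -
  define Q where "Q v = (\<Sum>i\<in>UNIV. g $ i * v $ i * (D *v v) $ i)" for v :: "real^'p"
  have Qpos: "Q v > 0" if "v \<noteq> 0" for v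
    using pd that quad_form[of v g D] unfolding Q_def by force
  have Qhom: "Q (a *\<^sub>R u) = a^2 * Q u" for a u
    unfolding Q_def by (simp add: matrix_vector_mult_scaleR sum_distrib_left power2_eq_square algebra_simps)
  have cD: "continuous_on UNIV (\<lambda>v. (D *v v) $ i)" for i
    by (rule bounded_linear.continuous_on[OF bounded_linear_compose[OF bounded_linear_vec_nth matrix_vector_mul_bounded_linear]])
       (rule continuous_on_id)
  have cv: "continuous_on UNIV (\<lambda>v::real^'p. v $ i)" for i
    by (rule bounded_linear.continuous_on[OF bounded_linear_vec_nth]) (rule continuous_on_id)
  have Qc: "continuous_on UNIV Q"
    unfolding Q_def by (intro continuous_intros cD cv)
  have "\<exists>v0\<in>sphere 0 1. \<forall>v\<in>sphere 0 1. Q v0 \<le> Q v"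
    by (rule continuous_attains_inf) (auto intro: continuous_on_subset[OF Qc])
  then obtain v0 where v0: "norm v0 = 1" "\<And>v. norm v = 1 \<Longrightarrow> Q v0 \<le> Q v" by auto
  have lam: "Q v0 > 0" using Qpos v0(1) by (metis norm_zero zero_neq_one)
  show ?thesis
  proof (intro exI[of _ "Q v0"] conjI allI)
    show "Q v0 > 0" by (rule lam)
    fix v :: "real^'p"
    show "Q v0 * (norm v)^2 \<le> (\<Sum>i\<in>UNIV. g $ i * v $ i * (D *v v) $ i)"
    proof (cases "v = 0")
      case True then show ?thesis by (simp add: Q_def)
    next
      case False
      define u where "u = (1 / norm v) *\<^sub>R v"
      have nu: "norm u = 1" unfolding u_def using False by simp
      have vu: "v = norm v *\<^sub>R u" unfolding u_def using False by simp
      have "Q v = (norm v)^2 * Q u" by (subst vu, rule Qhom)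
      moreover have "Q v0 \<le> Q u" by (rule v0(2)[OF nu])
      ultimately have "Q v0 * (norm v)^2 \<le> Q v" by (simp add: mult_right_mono mult.commute)
      then show ?thesis by (simp add: Q_def)
    qed
  qed
qed

lemma est:
  fixes g wh w yd Gx :: "real^'p" and D :: "real^'p^'p"
  assumes gpos: "\<forall>i. g $ i > 0"
    and lam: "(\<Sum>i\<in>UNIV. g $ i * w $ i * (D *v w) $ i) \<ge> lam * (norm w)^2" "lam \<ge> 0"
    and yd: "yd = Gx - D *v w"
    and wb: "\<forall>i. \<bar>w $ i\<bar> \<le> W"
    and Gxb: "norm Gx \<le> gb"
    and sm1: "(\<Sum>i\<in>UNIV. g $ i) * W * gb \<le> lam * c^2 / 4"
    and Yb: "\<forall>i. \<bar>yd $ i\<bar> \<le> Y"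
    and sm2: "(\<Sum>i\<in>UNIV. g $ i) * \<epsilon> * Y \<le> lam * c^2 / 4"
    and close: "\<forall>i. \<bar>wh $ i - w $ i\<bar> \<le> \<epsilon> \<or> yd $ i = 0" "\<epsilon> \<ge> 0"
    and big: "norm w \<ge> c" "c \<ge> 0"
  shows "(\<Sum>i\<in>UNIV. g $ i * wh $ i * yd $ i) \<le> - (lam * c^2 / 2)"
proof -
  have split: "(\<Sum>i\<in>UNIV. g $ i * wh $ i * yd $ i) = (\<Sum>i\<in>UNIV. g $ i * w $ i * yd $ i) + (\<Sum>i\<in>UNIV. g $ i * (wh $ i - w $ i) * yd $ i)"
    by (simp add: sum.distrib[symmetric] algebra_simps)
  have t2: "(\<Sum>i\<in>UNIV. g $ i * (wh $ i - w $ i) * yd $ i) \<le> (\<Sum>i\<in>UNIV. g $ i) * \<epsilon> * Y"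
  proof -
    have "(\<Sum>i\<in>UNIV. g $ i * (wh $ i - w $ i) * yd $ i) \<le> (\<Sum>i\<in>UNIV. g $ i * (\<epsilon> * Y))"
    proof (rule sum_mono)
      fix i
      have Y0: "0 \<le> Y" using Yb by (meson abs_ge_zero order_trans)
      have "(wh $ i - w $ i) * yd $ i \<le> \<epsilon> * Y"
      proof (cases "yd $ i = 0")
        case True then show ?thesis using close(2) Y0 by simp
      next
        case False
        then have c1: "\<bar>wh $ i - w $ i\<bar> \<le> \<epsilon>" using close(1) by blast
        have "(wh $ i - w $ i) * yd $ i \<le> \<bar>wh $ i - w $ i\<bar> * \<bar>yd $ i\<bar>" by (simp add: abs_mult[symmetric])
        also have "\<dots> \<le> \<epsilon> * Y" using c1 Yb close(2) by (intro mult_mono) auto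
        finally show ?thesis .
      qed
      then have "g $ i * ((wh $ i - w $ i) * yd $ i) \<le> g $ i * (\<epsilon> * Y)"
        using gpos by (intro mult_left_mono) (auto simp: less_imp_le)
      then show "g $ i * (wh $ i - w $ i) * yd $ i \<le> g $ i * (\<epsilon> * Y)" by (simp add: mult.assoc)
    qed
    also have "\<dots> = (\<Sum>i\<in>UNIV. g $ i) * \<epsilon> * Y" by (simp add: sum_distrib_right mult.assoc)
    finally show ?thesis .
  qed
  have t1a: "(\<Sum>i\<in>UNIV. g $ i * w $ i * yd $ i) = (\<Sum>i\<in>UNIV. g $ i * w $ i * Gx $ i) - (\<Sum>i\<in>UNIV. g $ i * w $ i * (D *v w) $ i)"
    by (simp add: yd sum_subtractf[symmetric] algebra_simps)
  have t1b: "(\<Sum>i\<in>UNIV. g $ i * w $ i * Gx $ i) \<le> (\<Sum>i\<in>UNIV. g $ i) * W * gb"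
  proof -
    have "(\<Sum>i\<in>UNIV. g $ i * w $ i * Gx $ i) \<le> (\<Sum>i\<in>UNIV. g $ i * (W * gb))"
    proof (rule sum_mono)
      fix i
      have "w $ i * Gx $ i \<le> \<bar>w $ i\<bar> * \<bar>Gx $ i\<bar>" by (simp add: abs_mult[symmetric])
      also have "\<dots> \<le> W * gb"
      proof (rule mult_mono)
        show "\<bar>w $ i\<bar> \<le> W" using wb by blast
        show "\<bar>Gx $ i\<bar> \<le> gb" using component_le_norm_cart[of Gx i] Gxb by linarith
        show "0 \<le> W" using wb by (meson abs_ge_zero order_trans)
      qed simp
      finally have "g $ i * (w $ i * Gx $ i) \<le> g $ i * (W * gb)"
        using gpos by (intro mult_left_mono) (auto simp: less_imp_le)
      then show "g $ i * w $ i * Gx $ i \<le> g $ i * (W * gb)" by (simp add: mult.assoc)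
    qed
    also have "\<dots> = (\<Sum>i\<in>UNIV. g $ i) * W * gb" by (simp add: sum_distrib_right mult.assoc)
    finally show ?thesis .
  qed
  have t1c: "lam * c^2 \<le> (\<Sum>i\<in>UNIV. g $ i * w $ i * (D *v w) $ i)"
  proof -
    have "c^2 \<le> (norm w)^2" using big by (intro power_mono) auto
    then have "lam * c^2 \<le> lam * (norm w)^2" using lam(2) by (rule mult_left_mono)
    then show ?thesis using lam(1) by linarith
  qed
  show ?thesis using split t2 t1a t1b t1c sm1 sm2 by linarith
qed




lemma dir2:
  fixes A :: "real^'n^'n" and B :: "real^'p^'n" and C :: "real^'n^'p" and psi :: "'p \<Rightarrow> real \<Rightarrow> real"
  assumes a3: "assumption3 A B C psi" and inv: "invertible C"
  shows "SFTS (lure_F A B C psi)"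
proof -
  define F where "F = lure_F A B C psi"
  define D where "D = C ** B"
  from a3 obtain \<gamma> :: "real^'p" where \<gamma>: "\<forall>i. \<gamma> $ i > 0"
    and pd: "\<forall>v. v \<noteq> 0 \<longrightarrow> v \<bullet> ((diag_mat \<gamma> ** D + transpose D ** diag_mat \<gamma>) *v v) > 0"
    and gas: "GAS F"
    and lims: "\<forall>i. (\<exists>l>0. (psi i \<longlongrightarrow> l) (at_right 0)) \<and> (\<exists>l<0. (psi i \<longlongrightarrow> l) (at_left 0))"
    unfolding assumption3_def Let_def D_def F_def by blast
  obtain lam where lam: "lam > 0" "\<And>v. (\<Sum>i\<in>UNIV. \<gamma> $ i * v $ i * (D *v v) $ i) \<ge> lam * (norm v)^2"
    using quad_lower[OF pd] by blast
  have "\<forall>i. \<exists>q. fst q > 0 \<and> (psi i \<longlongrightarrow> fst q) (at_right 0) \<and> snd q < 0 \<and> (psi i \<longlongrightarrow> snd q) (at_left 0)"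
  proof
    fix i
    from lims obtain l1 l2 where "l1 > 0" "(psi i \<longlongrightarrow> l1) (at_right 0)" "l2 < 0" "(psi i \<longlongrightarrow> l2) (at_left 0)" by blast
    then show "\<exists>q. fst q > 0 \<and> (psi i \<longlongrightarrow> fst q) (at_right 0) \<and> snd q < 0 \<and> (psi i \<longlongrightarrow> snd q) (at_left 0)"
      by (intro exI[of _ "(l1, l2)"]) simp
  qed
  then obtain qf where qf: "\<forall>i. fst (qf i) > 0 \<and> (psi i \<longlongrightarrow> fst (qf i)) (at_right 0) \<and> snd (qf i) < 0 \<and> (psi i \<longlongrightarrow> snd (qf i)) (at_left 0)"
    by (rule choice[THEN exE]) blast
  define lp where "lp i = fst (qf i)" for i
  define lm where "lm i = snd (qf i)" for i
  have lp: "lp i > 0" "(psi i \<longlongrightarrow> lp i) (at_right 0)" for i using qf unfolding lp_def by auto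
  have lm: "lm i < 0" "(psi i \<longlongrightarrow> lm i) (at_left 0)" for i using qf unfolding lm_def by auto
  define c where "c = Min (range (\<lambda>i. min (lp i) (- lm i) / 2))"
  have c: "c > 0" unfolding c_def using lp(1) lm(1) by simp
  have clp: "2 * c \<le> lp i" and clm: "2 * c \<le> - lm i" for i
  proof -
    have "c \<le> min (lp i) (- lm i) / 2" unfolding c_def by (rule Min_le) auto
    then show "2 * c \<le> lp i" "2 * c \<le> - lm i" by auto
  qed
  define W where "W = Max (range (\<lambda>i. max (max (\<bar>lp i\<bar> + 1) (\<bar>lm i\<bar> + 1)) \<bar>psi i 0\<bar>))"
  have Wge: "\<bar>lp i\<bar> + 1 \<le> W" "\<bar>lm i\<bar> + 1 \<le> W" "\<bar>psi i 0\<bar> \<le> W" for i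
  proof -
    have "max (max (\<bar>lp i\<bar> + 1) (\<bar>lm i\<bar> + 1)) \<bar>psi i 0\<bar> \<le> W" unfolding W_def by (rule Max_ge) auto
    then show "\<bar>lp i\<bar> + 1 \<le> W" "\<bar>lm i\<bar> + 1 \<le> W" "\<bar>psi i 0\<bar> \<le> W" by auto
  qed
  have W0: "W \<ge> 1" using Wge(1)[of undefined] by simp
  define Gs where "Gs = (\<Sum>i\<in>UNIV. \<gamma> $ i)"
  have Gs: "Gs > 0" unfolding Gs_def using \<gamma> by (intro sum_pos) auto
  obtain kG where kG: "kG > 0" "\<And>v. norm ((C ** A) *v v) \<le> kG * norm v" using mat_bound by blast
  obtain kD where kD: "kD > 0" "\<And>v. norm (D *v v) \<le> kD * norm v" using mat_bound by blast
  obtain kC where kC: "kC > 0" "\<And>v. norm (C *v v) \<le> kC * norm v" using mat_bound by blast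
  define Wn where "Wn = real CARD('p) * W"
  define Y where "Y = kG + kD * Wn"
  have Y0: "Y \<ge> 0" unfolding Y_def Wn_def using kG kD W0 by simp
  define \<epsilon> where "\<epsilon> = min (min 1 c) (lam * c^2 / (4 * (Gs * Y + 1)))"
  have GY0: "0 \<le> Gs * Y" using Gs Y0 by simp
  have \<epsilon>: "\<epsilon> > 0" "\<epsilon> \<le> 1" "\<epsilon> \<le> c" unfolding \<epsilon>_def using c lam(1) GY0 by (auto intro!: divide_pos_pos)
  have sm2: "Gs * \<epsilon> * Y \<le> lam * c^2 / 4"
  proof -
    have GY: "Gs * Y \<ge> 0" using Gs Y0 by simp
    have "\<epsilon> \<le> lam * c^2 / (4 * (Gs * Y + 1))" unfolding \<epsilon>_def by simp
    then have "Gs * Y * \<epsilon> \<le> Gs * Y * (lam * c^2 / (4 * (Gs * Y + 1)))" using GY by (rule mult_left_mono)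
    also have "\<dots> = (lam * c^2 / 4) * (Gs * Y / (Gs * Y + 1))" using GY by (simp add: field_simps)
    also have "\<dots> \<le> (lam * c^2 / 4) * 1" using GY lam(1) by (intro mult_left_mono) auto
    finally show ?thesis by (simp add: algebra_simps)
  qed
  have "\<forall>i. \<exists>e>0. \<forall>s. (0 < s \<and> s < e \<longrightarrow> \<bar>psi i s - lp i\<bar> < \<epsilon>) \<and> (-e < s \<and> s < 0 \<longrightarrow> \<bar>psi i s - lm i\<bar> < \<epsilon>)"
  proof
    fix i
    have "eventually (\<lambda>s. dist (psi i s) (lp i) < \<epsilon>) (at_right 0)" using lp(2) \<epsilon>(1) tendstoD by blast
    then obtain b1 where b1: "b1 > 0" "\<And>s. 0 < s \<Longrightarrow> s < b1 \<Longrightarrow> dist (psi i s) (lp i) < \<epsilon>"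
      unfolding eventually_at_right_field by auto
    have "eventually (\<lambda>s. dist (psi i s) (lm i) < \<epsilon>) (at_left 0)" using lm(2) \<epsilon>(1) tendstoD by blast
    then obtain b2 where b2: "b2 < 0" "\<And>s. b2 < s \<Longrightarrow> s < 0 \<Longrightarrow> dist (psi i s) (lm i) < \<epsilon>"
      unfolding eventually_at_left_field by auto
    show "\<exists>e>0. \<forall>s. (0 < s \<and> s < e \<longrightarrow> \<bar>psi i s - lp i\<bar> < \<epsilon>) \<and> (-e < s \<and> s < 0 \<longrightarrow> \<bar>psi i s - lm i\<bar> < \<epsilon>)"
      using b1 b2 by (intro exI[of _ "min b1 (-b2)"]) (auto simp: dist_real_def)
  qed
  then obtain ef where ef: "\<forall>i. ef i > 0 \<and> (\<forall>s. (0 < s \<and> s < ef i \<longrightarrow> \<bar>psi i s - lp i\<bar> < \<epsilon>) \<and> (-ef i < s \<and> s < 0 \<longrightarrow> \<bar>psi i s - lm i\<bar> < \<epsilon>))"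
    by (rule choice[THEN exE]) blast
  define \<eta> where "\<eta> = Min (range ef)"
  have \<eta>: "\<eta> > 0" unfolding \<eta>_def using ef by simp
  have \<eta>le: "\<eta> \<le> ef i" for i unfolding \<eta>_def by (rule Min_le) auto
  have psip: "\<bar>psi i s - lp i\<bar> < \<epsilon>" if "0 < s" "s < \<eta>" for i s using ef \<eta>le[of i] that by auto
  have psim: "\<bar>psi i s - lm i\<bar> < \<epsilon>" if "-\<eta> < s" "s < 0" for i s using ef \<eta>le[of i] that by auto
  have kp: "kras (psi i) s \<subseteq> {lp i - \<epsilon> .. lp i + \<epsilon>}" if "0 < s" "s < \<eta>" for i s
  proof (rule kras_sub)
    show "min s (\<eta> - s) / 2 > 0" using that by simp
    fix s' assume "s - min s (\<eta> - s) / 2 \<le> s'" "s' \<le> s + min s (\<eta> - s) / 2"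
    note h = this that min.cobounded1[of s "\<eta> - s"] min.cobounded2[of s "\<eta> - s"]
    have "0 < s'" using h by argo
    moreover have "s' < \<eta>" using h by argo
    ultimately show "psi i s' \<in> {lp i - \<epsilon> .. lp i + \<epsilon>}" using psip[of s' i] by auto
  qed
  have km: "kras (psi i) s \<subseteq> {lm i - \<epsilon> .. lm i + \<epsilon>}" if "-\<eta> < s" "s < 0" for i s
  proof (rule kras_sub)
    show "min (-s) (\<eta> + s) / 2 > 0" using that by simp
    fix s' assume "s - min (-s) (\<eta> + s) / 2 \<le> s'" "s' \<le> s + min (-s) (\<eta> + s) / 2"
    note h = this that min.cobounded1[of "-s" "\<eta> + s"] min.cobounded2[of "-s" "\<eta> + s"]
    have "-\<eta> < s'" using h by argo
    moreover have "s' < 0" using h by argo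
    ultimately show "psi i s' \<in> {lm i - \<epsilon> .. lm i + \<epsilon>}" using psim[of s' i] by auto
  qed
  have k0: "kras (psi i) 0 \<subseteq> {-W..W}" for i
  proof (rule kras_sub)
    show "\<eta> / 2 > 0" using \<eta> by simp
    fix s' assume s': "0 - \<eta> / 2 \<le> s'" "s' \<le> 0 + \<eta> / 2"
    consider "s' > 0" | "s' < 0" | "s' = 0" by linarith
    then show "psi i s' \<in> {-W..W}"
    proof cases
      case 1 then have "\<bar>psi i s' - lp i\<bar> < \<epsilon>" using s' \<eta> by (intro psip) auto
      then show ?thesis using Wge[of i] \<epsilon>(2) by auto
    next
      case 2 then have "\<bar>psi i s' - lm i\<bar> < \<epsilon>" using s' \<eta> by (intro psim) auto
      then show ?thesis using Wge[of i] \<epsilon>(2) by auto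
    next
      case 3 then show ?thesis using Wge(3)[of i] by auto
    qed
  qed
  have kW: "kras (psi i) s \<subseteq> {-W..W}" if "\<bar>s\<bar> < \<eta>" for i s
  proof -
    consider "s > 0" | "s < 0" | "s = 0" by linarith
    then show ?thesis
    proof cases
      case 1
      have "{lp i - \<epsilon> .. lp i + \<epsilon>} \<subseteq> {-W..W}" using Wge(1)[of i] \<epsilon>(2) lp(1)[of i] by auto
      then show ?thesis using kp[of s i] 1 that by auto
    next
      case 2
      have "{lm i - \<epsilon> .. lm i + \<epsilon>} \<subseteq> {-W..W}" using Wge(2)[of i] \<epsilon>(2) lm(1)[of i] by auto
      then show ?thesis using km[of s i] 2 that by auto
    next
      case 3 then show ?thesis using k0 by simp
    qed
  qed
  define \<rho> where "\<rho> = min 1 (min (\<eta> / (kC + 1)) (lam * c^2 / (4 * (Gs * W * kG + 1))))"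
  have GWk0: "0 \<le> Gs * W * kG" using Gs W0 kG by simp
  have \<rho>: "\<rho> > 0" "\<rho> \<le> 1" unfolding \<rho>_def using \<eta> kC(1) lam(1) c GWk0 by (auto intro!: divide_pos_pos)
  have \<rho>\<eta>: "\<bar>(C *v z) $ i\<bar> < \<eta>" if "norm z \<le> \<rho>" for z i
  proof -
    have "\<bar>(C *v z) $ i\<bar> \<le> norm (C *v z)" by (rule component_le_norm_cart)
    also have "\<dots> \<le> kC * norm z" by (rule kC(2))
    also have "\<dots> \<le> kC * (\<eta> / (kC + 1))" using that kC(1) unfolding \<rho>_def by (intro mult_left_mono) auto
    also have "\<dots> < \<eta>"
    proof -
      have "kC * (\<eta> / (kC + 1)) = \<eta> * (kC / (kC + 1))" by simp
      also have "\<dots> < \<eta> * 1" using \<eta> kC(1) by (intro mult_strict_left_mono) auto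
      finally show ?thesis by simp
    qed
    finally show ?thesis .
  qed
  have sm1: "Gs * W * (kG * \<rho>) \<le> lam * c^2 / 4"
  proof -
    have GW: "Gs * W * kG \<ge> 0" using Gs W0 kG by simp
    have "\<rho> \<le> lam * c^2 / (4 * (Gs * W * kG + 1))" unfolding \<rho>_def by simp
    then have "Gs * W * kG * \<rho> \<le> Gs * W * kG * (lam * c^2 / (4 * (Gs * W * kG + 1)))" using GW by (rule mult_left_mono)
    also have "\<dots> = (lam * c^2 / 4) * (Gs * W * kG / (Gs * W * kG + 1))" using GW by (simp add: field_simps)
    also have "\<dots> \<le> (lam * c^2 / 4) * 1" using GW lam(1) by (intro mult_left_mono) auto
    finally show ?thesis by (simp add: algebra_simps)
  qed
  define \<kappa> where "\<kappa> = lam * c^2 / 2"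
  have \<kappa>: "\<kappa> > 0" unfolding \<kappa>_def using lam c by simp
  define V where "V z = (\<Sum>i\<in>UNIV. \<gamma> $ i * Lf (lp i) (lm i) ((C *v z) $ i))" for z
  have key: "\<exists>d. ((\<lambda>s. V (x s)) has_real_derivative d) (at t) \<and> d \<le> 0 \<and> (C *v x t \<noteq> 0 \<longrightarrow> d \<le> - \<kappa>)"
    if xs: "norm (x t) \<le> \<rho>" "(x has_vector_derivative v) (at t)" "v \<in> F (x t)"
      "\<forall>i. (C *v x t) $ i \<noteq> 0 \<or> (C *v v) $ i = 0" for x t v
  proof -
    from xs(3) obtain w where w: "v = A *v x t - B *v w" "w \<in> kras_vec psi (C *v x t)"
      unfolding F_def lure_F_def by blast
    define y where "y = C *v x t"
    define yd where "yd = C *v v"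
    define wh where "wh = (\<chi> i. whf (lp i) (lm i) (y $ i))"
    have hd: "((\<lambda>s. (C *v x s) $ i) has_real_derivative yd $ i) (at t)" for i
    proof -
      have "((\<lambda>s. (C *v x s) $ i) has_vector_derivative (C *v v) $ i) (at t)"
        using bounded_linear.has_vector_derivative[OF bounded_linear_compose[OF bounded_linear_vec_nth[of i] matrix_vector_mul_bounded_linear[of C]] xs(2)]
        by simp
      then show ?thesis unfolding yd_def by (simp add: has_real_derivative_iff_has_vector_derivative)
    qed
    have dV: "((\<lambda>s. V (x s)) has_real_derivative (\<Sum>i\<in>UNIV. \<gamma> $ i * (wh $ i * yd $ i))) (at t)"
      unfolding V_def wh_def
    proof (rule DERIV_sum, rule DERIV_cmult)
      fix i
      show "((\<lambda>s. Lf (lp i) (lm i) ((C *v x s) $ i)) has_real_derivative (\<chi> i. whf (lp i) (lm i) (y $ i)) $ i * yd $ i) (at t)"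
        using chain_L[OF hd[of i], of "lp i" "lm i"] xs(4) unfolding y_def yd_def by simp
    qed
    have wk: "w $ i \<in> kras (psi i) (y $ i)" for i using w(2) unfolding kras_vec_def y_def by blast
    have yeta: "\<bar>y $ i\<bar> < \<eta>" for i unfolding y_def by (rule \<rho>\<eta>[OF xs(1)])
    show ?thesis
    proof (cases "y = 0")
      case True
      then have "wh = 0" unfolding wh_def by (simp add: vec_eq_iff whf_def)
      then show ?thesis using dV True \<kappa> unfolding y_def by (intro exI[of _ 0]) auto
    next
      case False
      then obtain i0 where i0: "y $ i0 \<noteq> 0" by (auto simp: vec_eq_iff)
      have wW: "\<forall>i. \<bar>w $ i\<bar> \<le> W" using wk kW[OF yeta] by (meson abs_le_iff atLeastAtMost_iff subsetD minus_le_iff)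
      have ydG: "yd = (C ** A) *v x t - D *v w"
        unfolding yd_def w(1) D_def by (simp add: matrix_vector_mult_diff_distrib matrix_vector_mul_assoc)
      have Gxb: "norm ((C ** A) *v x t) \<le> kG * \<rho>"
        using kG(2)[of "x t"] xs(1) kG(1) by (meson mult_left_mono less_imp_le order_trans)
      have nw: "norm w \<le> Wn"
      proof -
        have "norm w \<le> (\<Sum>i\<in>UNIV. \<bar>w $ i\<bar>)" by (rule norm_le_l1_cart)
        also have "\<dots> \<le> of_nat (card (UNIV::'p set)) * W" by (rule sum_bounded_above) (use wW in auto)
        finally show ?thesis unfolding Wn_def by simp
      qed
      have Yb: "\<forall>i. \<bar>yd $ i\<bar> \<le> Y"
      proof
        fix i
        have "\<bar>yd $ i\<bar> \<le> norm yd" by (rule component_le_norm_cart)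
        also have "\<dots> \<le> norm ((C ** A) *v x t) + norm (D *v w)" unfolding ydG by (rule norm_triangle_ineq4)
        also have "\<dots> \<le> kG * \<rho> + kD * Wn"
        proof (rule add_mono)
          show "norm ((C ** A) *v x t) \<le> kG * \<rho>" by (rule Gxb)
          show "norm (D *v w) \<le> kD * Wn" using kD(2)[of w] nw kD(1) by (meson mult_left_mono less_imp_le order_trans)
        qed
        also have "\<dots> \<le> kG + kD * Wn" using \<rho>(2) kG(1) by simp
        finally show "\<bar>yd $ i\<bar> \<le> Y" unfolding Y_def .
      qed
      have close: "\<forall>i. \<bar>wh $ i - w $ i\<bar> \<le> \<epsilon> \<or> yd $ i = 0"
      proof
        fix i
        consider "y $ i > 0" | "y $ i < 0" | "y $ i = 0" by linarith
        then show "\<bar>wh $ i - w $ i\<bar> \<le> \<epsilon> \<or> yd $ i = 0"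
        proof cases
          case 1
          have "w $ i \<in> {lp i - \<epsilon> .. lp i + \<epsilon>}" using kp[of "y $ i" i] 1 yeta[of i] wk[of i] by auto
          then show ?thesis using 1 unfolding wh_def whf_def by auto
        next
          case 2
          have "w $ i \<in> {lm i - \<epsilon> .. lm i + \<epsilon>}" using km[of "y $ i" i] 2 yeta[of i] wk[of i] by auto
          then show ?thesis using 2 unfolding wh_def whf_def by auto
        next
          case 3 then show ?thesis using xs(4) unfolding y_def yd_def by auto
        qed
      qed
      have big: "norm w \<ge> c"
      proof -
        have "\<bar>w $ i0\<bar> \<ge> c"
        proof (cases "y $ i0 > 0")
          case True
          have "w $ i0 \<in> {lp i0 - \<epsilon> .. lp i0 + \<epsilon>}" using kp[of "y $ i0" i0] True yeta[of i0] wk[of i0] by auto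
          then show ?thesis using clp[of i0] \<epsilon>(3) by auto
        next
          case False
          then have "y $ i0 < 0" using i0 by simp
          then have "w $ i0 \<in> {lm i0 - \<epsilon> .. lm i0 + \<epsilon>}" using km[of "y $ i0" i0] yeta[of i0] wk[of i0] by auto
          then show ?thesis using clm[of i0] \<epsilon>(3) by auto
        qed
        then show ?thesis using component_le_norm_cart[of w i0] by linarith
      qed
      have "(\<Sum>i\<in>UNIV. \<gamma> $ i * wh $ i * yd $ i) \<le> - (lam * c^2 / 2)"
      proof (rule est[where D=D and Gx="(C ** A) *v x t" and W=W and gb="kG * \<rho>" and Y=Y and \<epsilon>=\<epsilon>])
        show "\<forall>i. \<gamma> $ i > 0" by (rule \<gamma>)
        show "lam * (norm w)^2 \<le> (\<Sum>i\<in>UNIV. \<gamma> $ i * w $ i * (D *v w) $ i)" by (rule lam(2))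
        show "lam \<ge> 0" using lam(1) by simp
        show "yd = (C ** A) *v x t - D *v w" by (rule ydG)
        show "\<forall>i. \<bar>w $ i\<bar> \<le> W" by (rule wW)
        show "norm ((C ** A) *v x t) \<le> kG * \<rho>" by (rule Gxb)
        show "(\<Sum>i\<in>UNIV. \<gamma> $ i) * W * (kG * \<rho>) \<le> lam * c^2 / 4" using sm1 unfolding Gs_def .
        show "\<forall>i. \<bar>yd $ i\<bar> \<le> Y" by (rule Yb)
        show "(\<Sum>i\<in>UNIV. \<gamma> $ i) * \<epsilon> * Y \<le> lam * c^2 / 4" using sm2 unfolding Gs_def .
        show "\<forall>i. \<bar>wh $ i - w $ i\<bar> \<le> \<epsilon> \<or> yd $ i = 0" by (rule close)
        show "\<epsilon> \<ge> 0" using \<epsilon>(1) by simp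
        show "norm w \<ge> c" by (rule big)
        show "c \<ge> 0" using c by simp
      qed
      then have "(\<Sum>i\<in>UNIV. \<gamma> $ i * (wh $ i * yd $ i)) \<le> - \<kappa>" unfolding \<kappa>_def by (simp add: mult.assoc)
      then show ?thesis using dV \<kappa> False unfolding y_def by (intro exI[of _ "\<Sum>i\<in>UNIV. \<gamma> $ i * (wh $ i * yd $ i)"]) auto
    qed
  qed
  have Lfnn: "Lf (lp i) (lm i) s \<ge> 0" for i s
    using lp(1)[of i] lm(1)[of i] by (auto simp: Lf_def mult_nonpos_nonpos)
  have Lfpos: "Lf (lp i) (lm i) s > 0" if "s \<noteq> 0" for i s
  proof (cases "s > 0")
    case True then show ?thesis using lp(1)[of i] by (simp add: Lf_def)
  next
    case False then have "s < 0" using that by simp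
    then show ?thesis using lm(1)[of i] by (simp add: Lf_def mult_neg_neg)
  qed
  have Vnn: "V z \<ge> 0" for z
    unfolding V_def using \<gamma> Lfnn by (intro sum_nonneg mult_nonneg_nonneg) (auto simp: less_imp_le)
  have V0: "C *v z = 0" if Vz: "V z = 0" for z
  proof -
    have "\<forall>i\<in>UNIV. \<gamma> $ i * Lf (lp i) (lm i) ((C *v z) $ i) = 0"
      using Vz unfolding V_def
      by (subst sum_nonneg_eq_0_iff[symmetric]) (use \<gamma> Lfnn in \<open>auto simp: less_imp_le\<close>)
    then have "(C *v z) $ i = 0" for i
    proof -
      have "\<gamma> $ i * Lf (lp i) (lm i) ((C *v z) $ i) = 0" using \<open>\<forall>i\<in>UNIV. _\<close> by blast
      then have "Lf (lp i) (lm i) ((C *v z) $ i) = 0" using \<gamma>[rule_format, of i] by simp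
      then show ?thesis using Lfpos[of "(C *v z) $ i" i] by (cases "(C *v z) $ i = 0") auto
    qed
    then show ?thesis by (simp add: vec_eq_iff)
  qed
  have Vz0: "V z = 0" if "C *v z = 0" for z unfolding V_def using that by (simp add: Lf_def)
  define Lv where "Lv = (\<Sum>i\<in>UNIV. \<gamma> $ i * (\<bar>lp i\<bar> + \<bar>lm i\<bar>)) * kC"
  have Vlip: "\<bar>V z - V z'\<bar> \<le> Lv * norm (z - z')" for z z'
  proof -
    have "\<bar>V z - V z'\<bar> = \<bar>\<Sum>i\<in>UNIV. \<gamma> $ i * (Lf (lp i) (lm i) ((C *v z) $ i) - Lf (lp i) (lm i) ((C *v z') $ i))\<bar>"
      unfolding V_def by (simp add: sum_subtractf[symmetric] right_diff_distrib)
    also have "\<dots> \<le> (\<Sum>i\<in>UNIV. \<bar>\<gamma> $ i * (Lf (lp i) (lm i) ((C *v z) $ i) - Lf (lp i) (lm i) ((C *v z') $ i))\<bar>)"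
      by (rule sum_abs)
    also have "\<dots> \<le> (\<Sum>i\<in>UNIV. \<gamma> $ i * (\<bar>lp i\<bar> + \<bar>lm i\<bar>) * (kC * norm (z - z')))"
    proof (rule sum_mono)
      fix i
      have "\<bar>(C *v z) $ i - (C *v z') $ i\<bar> \<le> kC * norm (z - z')"
      proof -
        have "\<bar>(C *v z) $ i - (C *v z') $ i\<bar> = \<bar>(C *v (z - z')) $ i\<bar>" by (simp add: matrix_vector_mult_diff_distrib)
        also have "\<dots> \<le> norm (C *v (z - z'))" by (rule component_le_norm_cart)
        also have "\<dots> \<le> kC * norm (z - z')" by (rule kC(2))
        finally show ?thesis .
      qed
      then have "\<bar>Lf (lp i) (lm i) ((C *v z) $ i) - Lf (lp i) (lm i) ((C *v z') $ i)\<bar> \<le> (\<bar>lp i\<bar> + \<bar>lm i\<bar>) * (kC * norm (z - z'))"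
        using Lf_lip[of "lp i" "lm i" "(C *v z) $ i" "(C *v z') $ i"] by (meson mult_left_mono order_trans abs_ge_zero add_nonneg_nonneg)
      then have "\<gamma> $ i * \<bar>Lf (lp i) (lm i) ((C *v z) $ i) - Lf (lp i) (lm i) ((C *v z') $ i)\<bar> \<le> \<gamma> $ i * ((\<bar>lp i\<bar> + \<bar>lm i\<bar>) * (kC * norm (z - z')))"
        using \<gamma> by (intro mult_left_mono) (auto simp: less_imp_le)
      then show "\<bar>\<gamma> $ i * (Lf (lp i) (lm i) ((C *v z) $ i) - Lf (lp i) (lm i) ((C *v z') $ i))\<bar> \<le> \<gamma> $ i * (\<bar>lp i\<bar> + \<bar>lm i\<bar>) * (kC * norm (z - z'))"
        using \<gamma> by (simp add: abs_mult less_imp_le mult.assoc)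
    qed
    also have "\<dots> = Lv * norm (z - z')" unfolding Lv_def by (simp add: sum_distrib_right mult.assoc)
    finally show ?thesis .
  qed
  obtain Ci where Ci: "Ci ** C = mat 1" using inv unfolding invertible_def by blast
  have Cinj: "z = 0" if "C *v z = 0" for z
  proof -
    have "z = (Ci ** C) *v z" by (simp add: Ci)
    also have "\<dots> = Ci *v (C *v z)" by (simp add: matrix_vector_mul_assoc)
    also have "\<dots> = 0" using that by simp
    finally show ?thesis .
  qed
  show ?thesis unfolding SFTS_def F_def[symmetric]
  proof (intro conjI allI impI)
    show "forward_complete F" using gas unfolding GAS_def by blast
    show "GAS F" by (rule gas)
    fix x T assume sol: "is_sol F x T"
    show "\<exists>T0\<ge>0. \<forall>t. T0 \<le> t \<and> ereal t < T \<longrightarrow> x t = 0"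
    proof (cases "T = \<infinity>")
      case False
      have "T > 0" using sol unfolding is_sol_def by blast
      with False obtain r where r: "T = ereal r" by (cases T) auto
      show ?thesis by (intro exI[of _ "max 0 r"]) (auto simp: r)
    next
      case True
      from gas obtain \<beta> where \<beta>: "classKL \<beta>"
        "\<forall>x T. is_sol F x T \<longrightarrow> (\<forall>t. 0 \<le> t \<and> ereal t < T \<longrightarrow> norm (x t) \<le> \<beta> (norm (x 0)) t)"
        unfolding GAS_def by blast
      have xb: "norm (x t) \<le> \<beta> (norm (x 0)) t" if "t \<ge> 0" for t using \<beta>(2) sol True that by simp
      have "(\<beta> (norm (x 0)) \<longlongrightarrow> 0) at_top" using \<beta>(1) unfolding classKL_def by simp
      then have "eventually (\<lambda>t. \<beta> (norm (x 0)) t < \<rho>) at_top" using \<rho>(1) by (rule order_tendstoD(2))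
      then obtain t1' where t1': "\<And>t. t \<ge> t1' \<Longrightarrow> \<beta> (norm (x 0)) t < \<rho>" unfolding eventually_at_top_linorder by blast
      define t1 where "t1 = max 0 t1'"
      have t1: "t1 \<ge> 0" unfolding t1_def by simp
      have small: "norm (x t) \<le> \<rho>" if "t \<ge> t1" for t
      proof -
        have "norm (x t) \<le> \<beta> (norm (x 0)) t" using xb that t1 by simp
        also have "\<dots> < \<rho>" using t1' that unfolding t1_def by simp
        finally show ?thesis by simp
      qed
      define g where "g = (\<lambda>t. V (x t))"
      have gac: "abs_cont_on {t1..b} g" for b
      proof -
        have "abs_cont_on {0..max 0 b} x" using sol True unfolding is_sol_def by simp
        then have "abs_cont_on {t1..b} x" by (rule ac_subset) (auto simp: t1_def)
        then show ?thesis unfolding g_def by (rule ac_lip_comp) (rule Vlip)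
      qed
      have ae: "AE t in lborel. t1 < t \<longrightarrow> (\<exists>d. (g has_real_derivative d) (at t) \<and> d \<le> 0 \<and> (C *v x t \<noteq> 0 \<longrightarrow> d \<le> - \<kappa>))"
      proof -
        have a1: "AE t in lborel. 0 < t \<and> ereal t < T \<longrightarrow> (\<exists>v. (x has_vector_derivative v) (at t) \<and> v \<in> F (x t))"
          using sol unfolding is_sol_def by blast
        define Z where "Z i = {t. \<exists>d. ((\<lambda>s. (C *v x s) $ i) has_real_derivative d) (at t) \<and> (C *v x t) $ i = 0 \<and> d \<noteq> 0}" for i
        have a2: "AE t in lborel. \<forall>i. t \<notin> Z i"
        proof (rule eventually_all_finite)
          fix i show "AE t in lborel. t \<notin> Z i"
            unfolding Z_def by (rule AE_not_in[OF countable_imp_null_set_lborel[OF zero_set_countable]])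
        qed
        from a1 a2 show ?thesis
        proof eventually_elim
          case (elim t)
          show ?case
          proof
            assume tt: "t1 < t"
            then obtain v where v: "(x has_vector_derivative v) (at t)" "v \<in> F (x t)" using elim(1) True t1 by auto
            have alt: "\<forall>i. (C *v x t) $ i \<noteq> 0 \<or> (C *v v) $ i = 0"
            proof
              fix i
              have "((\<lambda>s. (C *v x s) $ i) has_vector_derivative (C *v v) $ i) (at t)"
                using bounded_linear.has_vector_derivative[OF bounded_linear_compose[OF bounded_linear_vec_nth[of i] matrix_vector_mul_bounded_linear[of C]] v(1)]
                by simp
              then have hd: "((\<lambda>s. (C *v x s) $ i) has_real_derivative (C *v v) $ i) (at t)"
                by (simp add: has_real_derivative_iff_has_vector_derivative)
              have "t \<notin> Z i" using elim(2) by blast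
              then show "(C *v x t) $ i \<noteq> 0 \<or> (C *v v) $ i = 0" using hd unfolding Z_def by blast
            qed
            have "norm (x t) \<le> \<rho>" using small tt by simp
            then show "\<exists>d. (g has_real_derivative d) (at t) \<and> d \<le> 0 \<and> (C *v x t \<noteq> 0 \<longrightarrow> d \<le> - \<kappa>)"
              using key[OF _ v(1) v(2) alt] unfolding g_def by blast
          qed
        qed
      qed
      have gmono: "g b \<le> g a" if ab: "t1 \<le> a" "a \<le> b" for a b
      proof (rule ac_mono[OF ab(2)])
        show "abs_cont_on {a..b} g" using gac[of b] by (rule ac_subset) (use ab in auto)
        show "AE t in lborel. a < t \<and> t < b \<longrightarrow> (\<exists>d. (g has_real_derivative d) (at t) \<and> d \<le> 0)"
          using ae
        proof eventually_elim
          case (elim t)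
          then show ?case using ab by force
        qed
      qed
      have gdec: "g t + \<kappa> * t \<le> g t1 + \<kappa> * t1" if tg: "t1 \<le> t" "g t > 0" for t
      proof -
        have "(\<lambda>s. g s + \<kappa> * s) t \<le> (\<lambda>s. g s + \<kappa> * s) t1"
        proof (rule ac_mono[OF tg(1)])
          show "abs_cont_on {t1..t} (\<lambda>s. g s + \<kappa> * s)" by (rule ac_add_lin[OF gac])
          show "AE s in lborel. t1 < s \<and> s < t \<longrightarrow> (\<exists>d. ((\<lambda>s. g s + \<kappa> * s) has_real_derivative d) (at s) \<and> d \<le> 0)"
            using ae
          proof eventually_elim
            case (elim s)
            show ?case
            proof
              assume st: "t1 < s \<and> s < t"
              then obtain d where d: "(g has_real_derivative d) (at s)" "d \<le> 0" "C *v x s \<noteq> 0 \<longrightarrow> d \<le> - \<kappa>"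
                using elim by blast
              have "g t \<le> g s" using gmono[of s t] st by simp
              then have "g s > 0" using tg(2) by simp
              then have "C *v x s \<noteq> 0" using Vz0 unfolding g_def by force
              then have dk: "d + \<kappa> \<le> 0" using d(3) by simp
              have "((\<lambda>s. g s + \<kappa> * s) has_real_derivative d + \<kappa>) (at s)"
                using d(1) by (auto intro!: derivative_eq_intros)
              then show "\<exists>d. ((\<lambda>s. g s + \<kappa> * s) has_real_derivative d) (at s) \<and> d \<le> 0" using dk by blast
            qed
          qed
        qed
        then show ?thesis by simp
      qed
      define T0 where "T0 = t1 + g t1 / \<kappa> + 1"
      have gt10: "g t1 / \<kappa> \<ge> 0" using Vnn \<kappa> unfolding g_def by simp
      show ?thesis
      proof (intro exI[of _ T0] conjI allI impI)
        show "T0 \<ge> 0" unfolding T0_def using t1 gt10 by simp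
        fix t assume "T0 \<le> t \<and> ereal t < T"
        then have tT0: "T0 \<le> t" by simp
        have tt1: "t1 \<le> t" using tT0 gt10 unfolding T0_def by simp
        have "g t \<le> 0"
        proof (rule ccontr)
          assume "\<not> g t \<le> 0"
          then have gp: "g t > 0" by simp
          from gdec[OF tt1 gp] have a: "\<kappa> * (t - t1) \<le> g t1 - g t" by (simp add: algebra_simps)
          have b: "\<kappa> * (g t1 / \<kappa> + 1) \<le> \<kappa> * (t - t1)" using tT0 \<kappa> unfolding T0_def by (intro mult_left_mono) auto
          have c: "\<kappa> * (g t1 / \<kappa> + 1) = g t1 + \<kappa>" using \<kappa> by (simp add: field_simps)
          show False using a b c gp \<kappa> by linarith
        qed
        then have "V (x t) = 0" using Vnn[of "x t"] unfolding g_def by simp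
        then have "C *v x t = 0" by (rule V0)
        then show "x t = 0" by (rule Cinj)
      qed
    qed
  qed
qed



theorem theorem3:
  fixes A :: "real^'n^'n" and B :: "real^'p^'n" and C :: "real^'n^'p"
    and psi :: "'p \<Rightarrow> real \<Rightarrow> real"
  assumes "assumption1 psi"
    and "assumption3 A B C psi"
  shows "SFTS (lure_F A B C psi) \<longleftrightarrow> invertible C"
  using dir1[OF assms(2)] dir2[OF assms(2)] by blast

end
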